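(* Let $(\mathcal A,\varphi,\mathcal F,\Phi)$ be a ncps of type B$'$ with associated infinitesimal ncps $(\mathcal B,\varphi,\varphi')$. Let $q\in\mathcal F$ satisfy $q^2=q$, $\Phi(q)=1$, and suppose $(\mathcal A,\{q\})$ is cyclic-antimonotone independent. Put $p:=1_{\mathcal B}-q$ and $\tilde a:=pap$ for $a\in\mathcal A$. Then for any $n\in\mathbb N$ and $a_1,\dots,a_n\in\mathcal A$, $$\varphi'(\tilde a_1\tilde a_2\cdots\tilde a_n)=-\sum_{\pi\in\mathrm{NC}(n)}|\mathrm{Kr}(\pi)|\,\kappa_\pi[a_1,a_2,\dots,a_n].$$
   Context: Ncps of type B$'$ $(\mathcal A,\varphi,\mathcal F,\Phi)$: $\mathcal A$ unital complex algebra, $\varphi:\mathcal A\to\mathbb C$ linear with $\varphi(1_{\mathcal A})=1$, $\mathcal F$ an algebra which is an $\mathcal A$-bimodule compatible with its multiplication, $\Phi:\mathcal F\to\mathbb C$ linear. $\mathcal B=\mathcal A\oplus\mathcal F$ with product $(a_1,f_1)(a_2,f_2)=(a_1a_2,a_1f_2+f_1a_2+f_1f_2)$ and unit $1_{\mathcal A}$; $\varphi(a+f):=\varphi(a)$, $\varphi'(a+f):=\Phi(f)$. $(\mathcal A,\{q\})$ cyclic-antimonotone independent means (with the subalgebra generated by $q$, which is $\mathbb Cq$) $\Phi(a_0qa_1q\cdots a_{n-1}qa_n)=\varphi(a_0a_n)\prod_{i=1}^{n-1}\varphi(a_i)\,\Phi(q)$ for all $n\ge1$, $a_l\in\mathcal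 A$. $\mathrm{NC}(n)$ is the lattice of noncrossing partitions of $\{1,\dots,n\}$; $\kappa_\pi$ are the free cumulants of $(\mathcal A,\varphi)$: multilinear maps defined by $\varphi(a_1\cdots a_n)=\sum_{\pi\in\mathrm{NC}(n)}\kappa_\pi[a_1,\dots,a_n]$ with $\kappa_\pi=\prod_{V\in\pi}\kappa_{|V|}$ applied to the arguments indexed by $V$ in increasing order. $\mathrm{Kr}(\pi)$ is the Kreweras complement of $\pi$ and $|\mathrm{Kr}(\pi)|$ its number of blocks, equal to $n+1-|\pi|$. *)

theory Defs
  imports Complex_Main "HOL-Library.Disjoint_Sets"
begin

definition complex_algebra :: "(complex \<Rightarrow> 'a::ring \<Rightarrow> 'a) \<Rightarrow> bool" where
  "complex_algebra sm \<longleftrightarrow>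
     (\<forall>c x y. sm c (x + y) = sm c x + sm c y) \<and>
     (\<forall>c d x. sm (c + d) x = sm c x + sm d x) \<and>
     (\<forall>c d x. sm c (sm d x) = sm (c * d) x) \<and>
     (\<forall>x. sm 1 x = x) \<and>
     (\<forall>c x y. sm c (x * y) = sm c x * y) \<and>
     (\<forall>c x y. sm c (x * y) = x * sm c y)"

definition bimodule_algebra ::
  "(complex \<Rightarrow> 'a::ring_1 \<Rightarrow> 'a) \<Rightarrow> (complex \<Rightarrow> 'f::ring \<Rightarrow> 'f)
   \<Rightarrow> ('a \<Rightarrow> 'f \<Rightarrow> 'f) \<Rightarrow> ('f \<Rightarrow> 'a \<Rightarrow> 'f) \<Rightarrow> bool" where
  "bimodule_algebra smA smF L R \<longleftrightarrow>
     (\<forall>a f g. L a (f + g) = L a f + L a g) \<and>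
     (\<forall>a b f. L (a + b) f = L a f + L b f) \<and>
     (\<forall>a b f. L (a * b) f = L a (L b f)) \<and>
     (\<forall>f. L 1 f = f) \<and>
     (\<forall>a f g. R (f + g) a = R f a + R g a) \<and>
     (\<forall>a b f. R f (a + b) = R f a + R f b) \<and>
     (\<forall>a b f. R f (a * b) = R (R f a) b) \<and>
     (\<forall>f. R f 1 = f) \<and>
     (\<forall>a b f. R (L a f) b = L a (R f b)) \<and>
     (\<forall>c a f. L (smA c a) f = smF c (L a f) \<and> L a (smF c f) = smF c (L a f)) \<and>
     (\<forall>c a f. R f (smA c a) = smF c (R f a) \<and> R (smF c f) a = smF c (R f a)) \<and>
     (\<forall>a f g. L a (f * g) = L a f * g) \<and>
     (\<forall>a f g. R (f * g) a = f * R g a) \<and>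
     (\<forall>a f g. R f a * g = f * L a g)"

definition complex_linear_functional :: "(complex \<Rightarrow> 'a::ring \<Rightarrow> 'a) \<Rightarrow> ('a \<Rightarrow> complex) \<Rightarrow> bool" where
  "complex_linear_functional sm \<psi> \<longleftrightarrow>
     (\<forall>x y. \<psi> (x + y) = \<psi> x + \<psi> y) \<and> (\<forall>c x. \<psi> (sm c x) = c * \<psi> x)"

definition ncps_typeB' ::
  "(complex \<Rightarrow> 'a::ring_1 \<Rightarrow> 'a) \<Rightarrow> (complex \<Rightarrow> 'f::ring \<Rightarrow> 'f)
   \<Rightarrow> ('a \<Rightarrow> 'f \<Rightarrow> 'f) \<Rightarrow> ('f \<Rightarrow> 'a \<Rightarrow> 'f) \<Rightarrow> ('a \<Rightarrow> complex) \<Rightarrow> ('f \<Rightarrow> complex) \<Rightarrow> bool" where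
  "ncps_typeB' smA smF L R \<phi> \<Phi> \<longleftrightarrow>
     complex_algebra smA \<and> complex_algebra smF \<and> bimodule_algebra smA smF L R \<and>
     complex_linear_functional smA \<phi> \<and> \<phi> 1 = 1 \<and> complex_linear_functional smF \<Phi>"

definition Bmult :: "('a::ring_1 \<Rightarrow> 'f::ring \<Rightarrow> 'f) \<Rightarrow> ('f \<Rightarrow> 'a \<Rightarrow> 'f)
    \<Rightarrow> 'a \<times> 'f \<Rightarrow> 'a \<times> 'f \<Rightarrow> 'a \<times> 'f" where
  "Bmult L R x y = (fst x * fst y, L (fst x) (snd y) + R (snd x) (fst y) + snd x * snd y)"

definition Bprod :: "('a::ring_1 \<Rightarrow> 'f::ring \<Rightarrow> 'f) \<Rightarrow> ('f \<Rightarrow> 'a \<Rightarrow> 'f) \<Rightarrow> ('a \<times> 'f) list \<Rightarrow> 'a \<times> 'f" where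
  "Bprod L R xs = foldr (Bmult L R) xs (1, 0)"

definition phi' :: "('f \<Rightarrow> complex) \<Rightarrow> 'a \<times> 'f \<Rightarrow> complex" where
  "phi' \<Phi> x = \<Phi> (snd x)"

definition alt_word :: "'f::ring \<Rightarrow> (nat \<Rightarrow> 'a::ring_1) \<Rightarrow> nat \<Rightarrow> ('a \<times> 'f) list" where
  "alt_word q a n = concat (map (\<lambda>i. [(a i, 0), (0, q)]) [0..<n]) @ [(a n, 0)]"

definition cyclic_antimonotone_indep ::
  "('a::ring_1 \<Rightarrow> 'f::ring \<Rightarrow> 'f) \<Rightarrow> ('f \<Rightarrow> 'a \<Rightarrow> 'f) \<Rightarrow> ('a \<Rightarrow> complex) \<Rightarrow> ('f \<Rightarrow> complex) \<Rightarrow> 'f \<Rightarrow> bool" where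
  "cyclic_antimonotone_indep L R \<phi> \<Phi> q \<longleftrightarrow>
     (\<forall>n::nat. n \<ge> 1 \<longrightarrow> (\<forall>a::nat \<Rightarrow> 'a.
        \<Phi> (snd (Bprod L R (alt_word q a n))) =
          \<phi> (a 0 * a n) * (\<Prod>i\<in>{1..<n}. \<phi> (a i)) * \<Phi> q))"

definition noncrossing :: "nat set set \<Rightarrow> bool" where
  "noncrossing \<pi> \<longleftrightarrow>
     (\<forall>V\<in>\<pi>. \<forall>W\<in>\<pi>. V \<noteq> W \<longrightarrow>
        \<not> (\<exists>a b c d. a < b \<and> b < c \<and> c < d \<and> a \<in> V \<and> c \<in> V \<and> b \<in> W \<and> d \<in> W))"

definition NC :: "nat \<Rightarrow> nat set set set" where
  "NC n = {\<pi>. partition_on {1..n} \<pi> \<and> noncrossing \<pi>}"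

text \<open>\<open>\<kappa>_\<pi>[a_1,\<dots>,a_n]\<close>, where \<open>\<kappa>\<close> maps a list of arguments \<open>[b_1,\<dots>,b_m]\<close>
  to \<open>\<kappa>_m[b_1,\<dots>,b_m]\<close>; the arguments of each block are taken in increasing order.\<close>
definition kappa_pi :: "('a list \<Rightarrow> complex) \<Rightarrow> nat set set \<Rightarrow> (nat \<Rightarrow> 'a) \<Rightarrow> complex" where
  "kappa_pi \<kappa> \<pi> a = (\<Prod>V\<in>\<pi>. \<kappa> (map a (sorted_list_of_set V)))"

text \<open>\<open>\<kappa>\<close> is the family of free cumulants of \<open>(A, \<phi>)\<close>: the moment--cumulant formula
  \<open>\<phi>(a_1\<cdots>a_n) = \<Sum>_{\<pi>\<in>NC(n)} \<kappa>_\<pi>[a_1,\<dots>,a_n]\<close> for all \<open>n \<ge> 1\<close>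
  (this determines \<open>\<kappa>_n\<close> for all \<open>n \<ge> 1\<close> recursively).\<close>
definition free_cumulants :: "('a::ring_1 \<Rightarrow> complex) \<Rightarrow> ('a list \<Rightarrow> complex) \<Rightarrow> bool" where
  "free_cumulants \<phi> \<kappa> \<longleftrightarrow>
     (\<forall>n::nat. n \<ge> 1 \<longrightarrow> (\<forall>a::nat \<Rightarrow> 'a.
        \<phi> (prod_list (map a [1..<n+1])) = (\<Sum>\<pi>\<in>NC n. kappa_pi \<kappa> \<pi> a)))"

text \<open>Number of blocks of the Kreweras complement of \<open>\<pi> \<in> NC(n)\<close>, i.e.
  \<open>|Kr(\<pi>)| = n + 1 - |\<pi>|\<close>.\<close>
definition kreweras_card :: "nat \<Rightarrow> nat set set \<Rightarrow> nat" where
  "kreweras_card n \<pi> = n + 1 - card \<pi>"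

end

theory Submission
  imports Defs "HOL-Library.Product_Plus"
begin

locale bm =
  fixes smA :: "complex \<Rightarrow> 'a::ring_1 \<Rightarrow> 'a" and smF :: "complex \<Rightarrow> 'f::ring \<Rightarrow> 'f"
    and L :: "'a \<Rightarrow> 'f \<Rightarrow> 'f" and R :: "'f \<Rightarrow> 'a \<Rightarrow> 'f"
  assumes bma: "bimodule_algebra smA smF L R"
begin

lemma Ladd1: "L a (f + g) = L a f + L a g" and Ladd2: "L (a + b) f = L a f + L b f"
  and Lmul: "L (a * b) f = L a (L b f)" and L1: "L 1 f = f"
  and Radd1: "R (f + g) a = R f a + R g a" and Radd2: "R f (a + b) = R f a + R f b"
  and Rmul: "R f (a * b) = R (R f a) b" and R1: "R f 1 = f"
  and LR: "R (L a f) b = L a (R f b)"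
  and Lm: "L a (f * g) = L a f * g" and Rm: "R (f * g) a = f * R g a"
  and RL: "R f a * g = f * L a g"
  using bma unfolding bimodule_algebra_def by auto

lemma L0 [simp]: "L a 0 = 0"
proof -
  have "L a (0 + 0) = L a 0 + L a 0" by (rule Ladd1)
  thus ?thesis by simp
qed
lemma R0 [simp]: "R 0 a = 0"
proof -
  have "R (0 + 0) a = R 0 a + R 0 a" by (rule Radd1)
  thus ?thesis by simp
qed
lemma L0' [simp]: "L 0 f = 0"
proof -
  have "L (0 + 0) f = L 0 f + L 0 f" by (rule Ladd2)
  thus ?thesis by simp
qed
lemma R0' [simp]: "R f 0 = 0"
proof -
  have "R f (0 + 0) = R f 0 + R f 0" by (rule Radd2)
  thus ?thesis by simp
qed
lemma Lneg: "L a (- f) = - L a f"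
  using Ladd1[of a f "-f"] by (simp add: minus_unique)
lemma Rneg: "R (- f) a = - R f a"
  using Radd1[of f "-f" a] by (simp add: minus_unique)
lemma Lneg2: "L (- a) f = - L a f"
  using Ladd2[of a "-a" f] by (simp add: minus_unique)
lemma Rneg2: "R f (- a) = - R f a"
  using Radd2[of f a "-a"] by (simp add: minus_unique)

abbreviation M (infixl "\<odot>" 70) where "x \<odot> y \<equiv> Bmult L R x y"

lemma M_assoc: "(x \<odot> y) \<odot> z = x \<odot> (y \<odot> z)"
  by (simp add: Bmult_def Ladd1 Radd1 Lmul Rmul LR Lm Rm RL distrib_left distrib_right
      mult.assoc add_ac)

lemma M_unitL [simp]: "(1, 0) \<odot> x = x"
  by (simp add: Bmult_def L1)
lemma M_unitR [simp]: "x \<odot> (1, 0) = x"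
  by (simp add: Bmult_def R1)

lemma M_addL: "(x + y) \<odot> z = x \<odot> z + y \<odot> z"
  by (simp add: Bmult_def Ladd2 Radd1 distrib_left distrib_right add_ac)
lemma M_addR: "z \<odot> (x + y) = z \<odot> x + z \<odot> y"
  by (simp add: Bmult_def Ladd1 Radd2 distrib_left distrib_right add_ac)
lemma M_zeroL [simp]: "0 \<odot> z = 0"
  by (simp add: Bmult_def zero_prod_def)
lemma M_negL: "(- x) \<odot> z = - (x \<odot> z)"
  by (simp add: Bmult_def Lneg2 Rneg)
lemma M_negR: "z \<odot> (- x) = - (z \<odot> x)"
  by (simp add: Bmult_def Lneg Rneg2)
lemma M_AA [simp]: "(x, 0) \<odot> (y, 0) = (x * y, 0)"
  by (simp add: Bmult_def)

lemma M_sumL: "(\<Sum>i\<in>I. f i) \<odot> z = (\<Sum>i\<in>I. f i \<odot> z)"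
  by (induction I rule: infinite_finite_induct) (auto simp: M_addL)

lemma Bprod_append: "Bprod L R (xs @ ys) = Bprod L R xs \<odot> Bprod L R ys"
  by (induction xs) (auto simp: Bprod_def M_assoc)

lemma Bprod_Cons: "Bprod L R (x # xs) = x \<odot> Bprod L R xs"
  by (simp add: Bprod_def)
lemma Bprod_Nil: "Bprod L R [] = (1, 0)"
  by (simp add: Bprod_def)

end

definition Aprod :: "(nat \<Rightarrow> 'a::ring_1) \<Rightarrow> nat set \<Rightarrow> 'a" where
  "Aprod a W = prod_list (map a (sorted_list_of_set W))"

definition cnt :: "nat set \<Rightarrow> nat \<Rightarrow> nat" where
  "cnt S x = card {s\<in>S. s < x}"

definition seg :: "nat \<Rightarrow> nat set \<Rightarrow> nat \<Rightarrow> nat set" where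
  "seg n S j = {x\<in>{1..n}. cnt S x = j}"

definition sg :: "nat set \<Rightarrow> 'b::group_add \<Rightarrow> 'b" where
  "sg S x = (if even (card S) then x else - x)"

lemma sg_neg: "sg S (- x) = - sg S x"
  by (simp add: sg_def)

lemma Aprod_empty [simp]: "Aprod a {} = 1"
  by (simp add: Aprod_def)

lemma sorted_union:
  assumes "finite X" "finite Y" "\<forall>x\<in>X. \<forall>y\<in>Y. x < y"
  shows "sorted_list_of_set (X \<union> Y) = sorted_list_of_set X @ sorted_list_of_set Y"
proof -
  have "sorted_wrt (<) (sorted_list_of_set X @ sorted_list_of_set Y)"
    using assms by (auto simp: sorted_wrt_append)
  moreover have "set (sorted_list_of_set X @ sorted_list_of_set Y) = X \<union> Y" using assms by simp
  moreover have "X \<inter> Y = {}" using assms by fastforce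
  ultimately show ?thesis using assms card_Un_disjoint[of X Y] sorted_list_of_set_unique[of "X \<union> Y" "sorted_list_of_set X @ sorted_list_of_set Y"]
    by simp
qed
lemma Aprod_union:
  assumes "finite X" "finite Y" "\<forall>x\<in>X. \<forall>y\<in>Y. x < y"
  shows "Aprod a (X \<union> Y) = Aprod a X * Aprod a Y"
  using sorted_union[OF assms] by (simp add: Aprod_def)

lemma Aprod_insert_max:
  assumes "finite X" "\<forall>x\<in>X. x < m"
  shows "Aprod a (insert m X) = Aprod a X * a m"
  using Aprod_union[OF assms(1), of "{m}"] assms by (simp add: Aprod_def)

lemma cnt_le: "finite S \<Longrightarrow> cnt S x \<le> card S"
  unfolding cnt_def by (rule card_mono) auto

lemma cnt_big: "finite S \<Longrightarrow> \<forall>s\<in>S. s < x \<Longrightarrow> cnt S x = card S"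
proof -
  assume "finite S" "\<forall>s\<in>S. s < x"
  then have "{s\<in>S. s < x} = S" by auto
  thus ?thesis by (simp add: cnt_def)
qed

lemma cnt_insert_big: "finite S \<Longrightarrow> x \<le> m \<Longrightarrow> cnt (insert m S) x = cnt S x"
  unfolding cnt_def by (rule arg_cong[where f=card]) auto

lemma seg_Suc:
  assumes "S \<subseteq> {0..n}"
  shows "seg (Suc n) S j = seg n S j \<union> (if j = card S then {Suc n} else {})"
proof -
  have fin: "finite S" using assms finite_subset by blast
  have c: "cnt S (Suc n) = card S" using assms fin by (intro cnt_big) auto
  have "{1..Suc n} = insert (Suc n) {1..n}" by auto
  then show ?thesis unfolding seg_def using c by (cases "j = card S") auto
qed

lemma seg_finite [simp]: "finite (seg n S j)"
  unfolding seg_def by (rule finite_subset[of _ "{1..n}"]) auto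

lemma seg_insert:
  assumes "S \<subseteq> {0..n}"
  shows "seg (Suc n) (insert (Suc n) S) j = seg (Suc n) S j"
proof -
  have fin: "finite S" using assms finite_subset by blast
  show ?thesis unfolding seg_def by (auto simp: cnt_insert_big[OF fin])
qed

lemma seg_over:
  assumes "finite S" "j > card S"
  shows "seg m S j = {}"
proof -
  have "cnt S x \<noteq> j" for x using cnt_le[OF assms(1), of x] assms(2) by simp
  thus ?thesis by (simp add: seg_def)
qed

locale bmq = bm smA smF L R for smA :: "complex \<Rightarrow> 'a::ring_1 \<Rightarrow> 'a" and smF :: "complex \<Rightarrow> 'f::ring \<Rightarrow> 'f"
    and L :: "'a \<Rightarrow> 'f \<Rightarrow> 'f" and R :: "'f \<Rightarrow> 'a \<Rightarrow> 'f" +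
  fixes q :: "'f"
  assumes qq: "q * q = q"
begin

definition bseg where "bseg a n S j = Aprod a (seg n S j)"

definition Wd where "Wd a n S = Bprod L R (alt_word q (bseg a n S) (card S))"

primrec Pw where
  "Pw a 0 = (1, - q)"
| "Pw a (Suc n) = Pw a n \<odot> (a (Suc n), 0) \<odot> (1, - q)"

lemma pp: "(1, - q) \<odot> (1, - q) = (1, - q)"
  by (simp add: Bmult_def L1 R1 qq)

lemma Bprod_single [simp]: "Bprod L R [x] = x"
  by (simp add: Bprod_def)

lemma alt_word_Suc:
  "alt_word q b (Suc k) = concat (map (\<lambda>i. [(b i, 0), (0, q)]) [0..<k]) @ [(b k, 0), (0, q)] @ [(b (Suc k), 0)]"
  by (simp add: alt_word_def)

lemma Bprod_aw:
  "Bprod L R (alt_word q b k) = Bprod L R (concat (map (\<lambda>i. [(b i, 0), (0, q)]) [0..<k])) \<odot> (b k, 0)"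
  by (simp add: alt_word_def Bprod_append)

lemma Bprod_aw_Suc:
  "Bprod L R (alt_word q b (Suc k)) = Bprod L R (alt_word q b k) \<odot> (0, q) \<odot> (b (Suc k), 0)"
  by (simp add: alt_word_Suc Bprod_aw Bprod_append Bprod_Cons Bprod_Nil M_assoc)

lemma Bprod_aw_upd:
  "Bprod L R (alt_word q (b(k := y)) k) = Bprod L R (concat (map (\<lambda>i. [(b i, 0), (0, q)]) [0..<k])) \<odot> (y, 0)"
proof -
  have eq: "map (\<lambda>i. [((b(k := y)) i, 0), (0, q)]) [0..<k] = map (\<lambda>i. [(b i, 0), (0, q)]) [0..<k]"
    by auto
  show ?thesis by (simp only: Bprod_aw[of "b(k := y)"] eq fun_upd_same)
qed

lemma Bprod_aw_mult:
  "Bprod L R (alt_word q (b(k := b k * x)) k) = Bprod L R (alt_word q b k) \<odot> (x, 0)"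
  by (simp only: Bprod_aw_upd Bprod_aw[of b k] M_assoc M_AA)

lemma bseg_Suc:
  assumes "S \<subseteq> {0..n}"
  shows "bseg a (Suc n) S = (bseg a n S)(card S := bseg a n S (card S) * a (Suc n))"
proof
  fix j
  show "bseg a (Suc n) S j = ((bseg a n S)(card S := bseg a n S (card S) * a (Suc n))) j"
  proof (cases "j = card S")
    case True
    have lt: "\<forall>x\<in>seg n S j. x < Suc n" unfolding seg_def by auto
    then show ?thesis using True seg_Suc[OF assms, of j] Aprod_insert_max[OF seg_finite lt]
      by (simp add: bseg_def)
  next
    case False
    then show ?thesis using seg_Suc[OF assms, of j] by (simp add: bseg_def)
  qed
qed

lemma Wd_Suc1:
  assumes "S \<subseteq> {0..n}"
  shows "Wd a (Suc n) S = Wd a n S \<odot> (a (Suc n), 0)"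
  unfolding Wd_def bseg_Suc[OF assms] Bprod_aw_mult ..

lemma Wd_Suc2:
  assumes "S \<subseteq> {0..n}"
  shows "Wd a (Suc n) (insert (Suc n) S) = Wd a n S \<odot> (a (Suc n), 0) \<odot> (0, q)"
proof -
  have fin: "finite S" using assms finite_subset by blast
  have nin: "Suc n \<notin> S" using assms by auto
  have b: "bseg a (Suc n) (insert (Suc n) S) = bseg a (Suc n) S"
    by (rule ext) (simp add: bseg_def seg_insert[OF assms])
  have one: "bseg a (Suc n) S (Suc (card S)) = 1"
    by (simp add: bseg_def seg_over[OF fin])
  have "Wd a (Suc n) (insert (Suc n) S) = Bprod L R (alt_word q (bseg a (Suc n) S) (Suc (card S)))"
    unfolding Wd_def b using fin nin by simp
  also have "\<dots> = Wd a (Suc n) S \<odot> (0, q)"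
    unfolding Bprod_aw_Suc one Wd_def by simp
  finally show ?thesis using Wd_Suc1[OF assms] by simp
qed

lemma sg_M: "sg S x \<odot> y = sg S (x \<odot> y)"
  by (simp add: sg_def M_negL)

lemma Pow_Suc: "Pow {0..Suc n} = Pow {0..n} \<union> insert (Suc n) ` Pow {0..n}"
proof -
  have "{0..Suc n} = insert (Suc n) {0..n}" by auto
  thus ?thesis by (simp add: Pow_insert)
qed

lemma sum_Pow_Suc:
  "(\<Sum>S\<in>Pow {0..Suc n}. f S) = (\<Sum>S\<in>Pow {0..n}. f S) + (\<Sum>S\<in>Pow {0..n}. f (insert (Suc n) S))"
proof -
  have inj: "inj_on (insert (Suc n)) (Pow {0..n})"
  proof (rule inj_onI)
    fix A B assume "A \<in> Pow {0..n}" "B \<in> Pow {0..n}" "insert (Suc n) A = insert (Suc n) B"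
    moreover then have "Suc n \<notin> A" "Suc n \<notin> B" by auto
    ultimately show "A = B" by (simp add: insert_ident)
  qed
  have disj: "Pow {0..n} \<inter> insert (Suc n) ` Pow {0..n} = {}" by auto
  show ?thesis unfolding Pow_Suc
    by (subst sum.union_disjoint) (use disj inj in \<open>auto simp: sum.reindex\<close>)
qed

lemma expansion: "Pw a n = (\<Sum>S\<in>Pow {0..n}. sg S (Wd a n S))"
proof (induction n)
  case 0
  have P: "Pow {0::nat} = {{}, {0}}" by auto
  have "Wd a 0 {} = (1, 0)"
    by (simp add: Wd_def alt_word_def bseg_def seg_def)
  moreover have "Wd a 0 {0} = (0, q)"
    by (simp add: Wd_def alt_word_def bseg_def seg_def Bprod_Cons Bprod_Nil)
  ultimately show ?case by (simp add: P sg_def)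
next
  case (Suc n)
  have p: "(1::'a, - q) = (1, 0) + - (0, q)" by simp
  have "Pw a (Suc n) = (\<Sum>S\<in>Pow {0..n}. sg S (Wd a n S)) \<odot> (a (Suc n), 0) \<odot> (1, - q)"
    using Suc by simp
  also have "\<dots> = (\<Sum>S\<in>Pow {0..n}. sg S (Wd a n S \<odot> (a (Suc n), 0)) +
                      sg S (- (Wd a n S \<odot> (a (Suc n), 0) \<odot> (0, q))))"
    unfolding M_sumL sg_M p M_addR M_negR by (simp add: sum.distrib sum_negf sg_neg sum_subtractf)
  also have "\<dots> = (\<Sum>S\<in>Pow {0..n}. sg S (Wd a (Suc n) S)) +
       (\<Sum>S\<in>Pow {0..n}. sg (insert (Suc n) S) (Wd a (Suc n) (insert (Suc n) S)))"
  proof -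
    have "sg S (Wd a n S \<odot> (a (Suc n), 0)) + sg S (- (Wd a n S \<odot> (a (Suc n), 0) \<odot> (0, q)))
        = sg S (Wd a (Suc n) S) + sg (insert (Suc n) S) (Wd a (Suc n) (insert (Suc n) S))"
      if "S \<in> Pow {0..n}" for S
    proof -
      have S: "S \<subseteq> {0..n}" using that by auto
      have fin: "finite S" using S finite_subset by blast
      have "Suc n \<notin> S" using S by auto
      then have "card (insert (Suc n) S) = Suc (card S)" using fin by simp
      then show ?thesis using Wd_Suc1[OF S] Wd_Suc2[OF S] by (simp add: sg_def)
    qed
    thus ?thesis by (simp add: sum.distrib)
  qed
  also have "\<dots> = (\<Sum>S\<in>Pow {0..Suc n}. sg S (Wd a (Suc n) S))"
    by (simp add: sum_Pow_Suc)
  finally show ?case .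
qed

lemma Pw_tilde:
  assumes "n \<ge> 1"
  shows "Bprod L R (map (\<lambda>i. (1, - q) \<odot> ((a i, 0) \<odot> (1, - q))) [1..<n+1]) = Pw a n"
  using assms
proof (induction n rule: dec_induct)
  case base
  then show ?case by (simp add: M_assoc)
next
  case (step m)
  have "Bprod L R (map (\<lambda>i. (1, - q) \<odot> ((a i, 0) \<odot> (1, - q))) [1..<Suc m + 1])
      = Pw a m \<odot> ((1, - q) \<odot> ((a (Suc m), 0) \<odot> (1, - q)))"
  proof -
    have eq: "[1..<Suc m + 1] = [1..<m+1] @ [Suc m]" by simp
    show ?thesis unfolding eq map_append Bprod_append step.IH by simp
  qed
  also have "\<dots> = (Pw a m \<odot> (1, - q)) \<odot> (a (Suc m), 0) \<odot> (1, - q)"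
    by (simp add: M_assoc)
  also have "Pw a m \<odot> (1, - q) = Pw a m"
  proof -
    obtain m' where "m = Suc m'" using step(1) by (cases m) auto
    thus ?thesis by (simp add: M_assoc pp)
  qed
  finally show ?case by simp
qed

end

definition blk :: "nat set \<Rightarrow> nat \<Rightarrow> nat" where
  "blk S x = (if cnt S x = card S then 0 else cnt S x)"

definition cls :: "nat \<Rightarrow> nat set \<Rightarrow> nat \<Rightarrow> nat set" where
  "cls n S j = {x\<in>{1..n}. blk S x = j}"

lemma cnt_mono: "finite S \<Longrightarrow> x \<le> y \<Longrightarrow> cnt S x \<le> cnt S y"
  unfolding cnt_def by (rule card_mono) auto

lemma cls_finite [simp]: "finite (cls n S j)"
  unfolding cls_def by (rule finite_subset[of _ "{1..n}"]) auto

lemma cls0: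
  assumes "finite S" "S \<noteq> {}"
  shows "cls n S 0 = seg n S 0 \<union> seg n S (card S)"
proof -
  have "card S > 0" using assms by auto
  thus ?thesis unfolding cls_def seg_def blk_def by auto
qed

lemma clsi:
  assumes "0 < i" "i < card S"
  shows "cls n S i = seg n S i"
  using assms unfolding cls_def seg_def blk_def by auto

lemma seg_lt:
  assumes "finite S" "S \<noteq> {}"
  shows "\<forall>x\<in>seg n S 0. \<forall>y\<in>seg n S (card S). x < y"
proof (intro ballI)
  fix x y assume x: "x \<in> seg n S 0" and y: "y \<in> seg n S (card S)"
  have "card S > 0" using assms by auto
  show "x < y"
  proof (rule ccontr)
    assume "\<not> x < y"
    then have "cnt S y \<le> cnt S x" using cnt_mono[OF assms(1)] by simp
    thus False using x y \<open>card S > 0\<close> unfolding seg_def by simp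
  qed
qed

context bmq
begin

lemma Phi_Wd:
  fixes \<phi> :: "'a \<Rightarrow> complex" and \<Phi> :: "'f \<Rightarrow> complex"
  assumes ind: "cyclic_antimonotone_indep L R \<phi> \<Phi> q" and Phiq: "\<Phi> q = 1"
    and S: "S \<subseteq> {0..n}" "S \<noteq> {}"
  shows "\<Phi> (snd (Wd a n S)) = (\<Prod>j\<in>{0..<card S}. \<phi> (Aprod a (cls n S j)))"
proof -
  have fin: "finite S" using S finite_subset by blast
  define k where "k = card S"
  have k: "k \<ge> 1" using fin S k_def by (simp add: Suc_leI card_gt_0_iff)
  have "\<Phi> (snd (Wd a n S)) = \<phi> (bseg a n S 0 * bseg a n S k) * (\<Prod>i\<in>{1..<k}. \<phi> (bseg a n S i)) * \<Phi> q"
    using ind k unfolding cyclic_antimonotone_indep_def Wd_def k_def by blast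
  also have "bseg a n S 0 * bseg a n S k = Aprod a (cls n S 0)"
    unfolding bseg_def k_def cls0[OF fin S(2)] by (rule Aprod_union[OF seg_finite seg_finite seg_lt[OF fin S(2)], symmetric])
  also have "(\<Prod>i\<in>{1..<k}. \<phi> (bseg a n S i)) = (\<Prod>i\<in>{1..<k}. \<phi> (Aprod a (cls n S i)))"
    by (rule prod.cong) (auto simp: bseg_def clsi k_def)
  also have "\<phi> (Aprod a (cls n S 0)) * (\<Prod>i\<in>{1..<k}. \<phi> (Aprod a (cls n S i))) =
      (\<Prod>j\<in>{0..<k}. \<phi> (Aprod a (cls n S j)))"
    using k by (simp add: prod.atLeast_Suc_lessThan)
  finally show ?thesis using Phiq k_def by simp
qed

end

definition NCon :: "nat set \<Rightarrow> nat set set set" where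
  "NCon U = {\<pi>. partition_on U \<pi> \<and> noncrossing \<pi>}"

lemma NC_NCon: "NC n = NCon {1..n}"
  by (simp add: NC_def NCon_def)

lemma NCon_empty: "NCon {} = {{}}"
  by (auto simp: NCon_def partition_on_empty noncrossing_def)

lemma NCon_finite: "finite U \<Longrightarrow> finite (NCon U)"
  unfolding NCon_def
  by (rule finite_subset[OF _ finitely_many_partition_on]) auto

definition smono :: "nat set \<Rightarrow> (nat \<Rightarrow> nat) \<Rightarrow> bool" where
  "smono A h \<longleftrightarrow> (\<forall>x\<in>A. \<forall>y\<in>A. x < y \<longrightarrow> h x < h y)"

lemma smono_inj: "smono A h \<Longrightarrow> inj_on h A"
  unfolding smono_def inj_on_def by (metis linorder_neqE_nat less_irrefl)

lemma smono_rev: "smono A h \<Longrightarrow> x \<in> A \<Longrightarrow> y \<in> A \<Longrightarrow> h x < h y \<Longrightarrow> x < y"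
  unfolding smono_def by (metis linorder_neqE_nat less_asym less_irrefl)

lemma smono_subset: "smono A h \<Longrightarrow> B \<subseteq> A \<Longrightarrow> smono B h"
  unfolding smono_def by blast

lemma sorted_image:
  assumes "smono A h" "V \<subseteq> A" "finite V"
  shows "sorted_list_of_set (h ` V) = map h (sorted_list_of_set V)"
proof -
  have "sorted_wrt (<) (map h (sorted_list_of_set V))"
    unfolding sorted_wrt_map
    by (rule sorted_wrt_mono_rel[OF _ strict_sorted_list_of_set])
       (use assms in \<open>auto simp: smono_def\<close>)
  moreover have "distinct (map h (sorted_list_of_set V))"
    using assms smono_inj[OF smono_subset[OF assms(1,2)]] by (simp add: distinct_map)
  ultimately show ?thesis using assms
    sorted_list_of_set_unique[of "h ` V" "map h (sorted_list_of_set V)"]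
    using card_image[OF smono_inj[OF smono_subset[OF assms(1,2)]]] by simp
qed

lemma NCon_image:
  assumes "smono A h" "\<pi> \<in> NCon A"
  shows "(`) h ` \<pi> \<in> NCon (h ` A)"
proof -
  have P: "partition_on A \<pi>" and N: "noncrossing \<pi>" using assms by (auto simp: NCon_def)
  have inj: "inj_on h A" using smono_inj[OF assms(1)] .
  have "partition_on (h ` A) ((`) h ` \<pi> - {{}})" by (rule partition_on_inj_image[OF P inj])
  moreover have "{} \<notin> (`) h ` \<pi>" using partition_onD3[OF P] by auto
  ultimately have P': "partition_on (h ` A) ((`) h ` \<pi>)" by simp
  have sub: "\<And>V. V \<in> \<pi> \<Longrightarrow> V \<subseteq> A" using partition_onD1[OF P] by auto
  have "noncrossing ((`) h ` \<pi>)"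
    unfolding noncrossing_def
  proof (intro ballI impI notI)
    fix V' W' assume V': "V' \<in> (`) h ` \<pi>" and W': "W' \<in> (`) h ` \<pi>" and ne: "V' \<noteq> W'"
    assume "\<exists>a b c d. a < b \<and> b < c \<and> c < d \<and> a \<in> V' \<and> c \<in> V' \<and> b \<in> W' \<and> d \<in> W'"
    then obtain a b c d where o: "a < b" "b < c" "c < d" and m: "a \<in> V'" "c \<in> V'" "b \<in> W'" "d \<in> W'"
      by blast
    obtain V where V: "V \<in> \<pi>" "V' = h ` V" using V' by (rule imageE) simp
    obtain W where W: "W \<in> \<pi>" "W' = h ` W" using W' by (rule imageE) simp
    note VW = V(1) W(1) V(2) W(2)
    obtain a' c' where a': "a' \<in> V" "c' \<in> V" "a = h a'" "c = h c'" using m VW by auto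
    obtain b' d' where b': "b' \<in> W" "d' \<in> W" "b = h b'" "d = h d'" using m VW by auto
    have inA: "a' \<in> A" "b' \<in> A" "c' \<in> A" "d' \<in> A" using a' b' sub VW by auto
    have "a' < b'" using smono_rev[OF assms(1) inA(1,2)] o a' b' by simp
    moreover have "b' < c'" using smono_rev[OF assms(1) inA(2,3)] o a' b' by simp
    moreover have "c' < d'" using smono_rev[OF assms(1) inA(3,4)] o a' b' by simp
    moreover have "V \<noteq> W" using ne VW by auto
    ultimately show False using N VW(1,2) a'(1,2) b'(1,2)
      unfolding noncrossing_def by metis
  qed
  with P' show ?thesis by (simp add: NCon_def)
qed

lemma kappa_image:
  assumes "smono A h" "\<pi> \<in> NCon A" "finite A"
  shows "kappa_pi \<kappa> ((`) h ` \<pi>) a = kappa_pi \<kappa> \<pi> (a \<circ> h)"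
proof -
  have P: "partition_on A \<pi>" using assms by (auto simp: NCon_def)
  have sub: "\<And>V. V \<in> \<pi> \<Longrightarrow> V \<subseteq> A" using partition_onD1[OF P] by auto
  have inj: "inj_on ((`) h) \<pi>"
    by (rule inj_on_image, rule inj_on_subset[OF smono_inj[OF assms(1)]]) (use sub in auto)
  have "kappa_pi \<kappa> ((`) h ` \<pi>) a = (\<Prod>V\<in>\<pi>. \<kappa> (map a (sorted_list_of_set (h ` V))))"
    unfolding kappa_pi_def by (simp add: prod.reindex[OF inj])
  also have "\<dots> = (\<Prod>V\<in>\<pi>. \<kappa> (map (a \<circ> h) (sorted_list_of_set V)))"
  proof (rule prod.cong[OF refl])
    fix V assume "V \<in> \<pi>"
    then have VA: "V \<subseteq> A" using sub by auto
    then have "finite V" using assms(3) finite_subset by blast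
    note VA this
    then show "\<kappa> (map a (sorted_list_of_set (h ` V))) = \<kappa> (map (a \<circ> h) (sorted_list_of_set V))"
      using sorted_image[OF assms(1)] by simp
  qed
  finally show ?thesis unfolding kappa_pi_def .
qed

lemma smono_inv:
  assumes "smono A h"
  shows "smono (h ` A) (inv_into A h)"
  unfolding smono_def
proof (intro ballI impI)
  fix x y assume "x \<in> h ` A" "y \<in> h ` A" "x < y"
  then obtain u v where "u \<in> A" "v \<in> A" "x = h u" "y = h v" by auto
  moreover have "inj_on h A" using smono_inj[OF assms] .
  ultimately show "inv_into A h x < inv_into A h y"
    using smono_rev[OF assms] \<open>x < y\<close> by simp
qed

lemma sum_NCon_image:
  assumes "smono A h" "finite A"
  shows "(\<Sum>\<pi>\<in>NCon A. kappa_pi \<kappa> \<pi> (a \<circ> h)) = (\<Sum>\<rho>\<in>NCon (h ` A). kappa_pi \<kappa> \<rho> a)"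
proof -
  have inj: "inj_on ((`) ((`) h)) (NCon A)"
  proof (rule inj_on_image)
    have "inj_on ((`) h) (Pow A)" by (rule inj_on_image) (use smono_inj[OF assms(1)] in auto)
    then show "inj_on ((`) h) (\<Union> (NCon A))"
      by (rule inj_on_subset) (auto simp: NCon_def dest: partition_onD1)
  qed
  have img: "(`) ((`) h) ` NCon A = NCon (h ` A)"
  proof
    show "(`) ((`) h) ` NCon A \<subseteq> NCon (h ` A)" using NCon_image[OF assms(1)] by auto
  next
    show "NCon (h ` A) \<subseteq> (`) ((`) h) ` NCon A"
    proof
      fix \<rho> assume r: "\<rho> \<in> NCon (h ` A)"
      let ?g = "inv_into A h"
      have ga: "?g ` h ` A = A" using smono_inj[OF assms(1)] by simp
      have "(`) ?g ` \<rho> \<in> NCon A" using NCon_image[OF smono_inv[OF assms(1)] r] ga by simp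
      moreover have "(`) h ` (`) ?g ` \<rho> = \<rho>"
      proof -
        have "\<And>V. V \<in> \<rho> \<Longrightarrow> V \<subseteq> h ` A" using r unfolding NCon_def partition_on_def by auto
        then have "\<And>V. V \<in> \<rho> \<Longrightarrow> h ` ?g ` V = V"
          by (simp add: image_image f_inv_into_f subset_iff cong: image_cong)
        thus ?thesis by (simp add: image_image)
      qed
      ultimately show "\<rho> \<in> (`) ((`) h) ` NCon A" by (metis image_eqI)
    qed
  qed
  show ?thesis
    unfolding img[symmetric] sum.reindex[OF inj]
    by (rule sum.cong[OF refl]) (simp add: kappa_image[OF assms(1) _ assms(2)])
qed

lemma moment_cumulant_set:
  assumes fc: "free_cumulants \<phi> \<kappa>" and phi1: "\<phi> 1 = 1" and W: "finite W"
  shows "\<phi> (Aprod a W) = (\<Sum>\<rho>\<in>NCon W. kappa_pi \<kappa> \<rho> a)"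
proof (cases "W = {}")
  case True
  then show ?thesis by (simp add: NCon_empty kappa_pi_def phi1)
next
  case False
  define m where "m = card W"
  define sl where "sl = sorted_list_of_set W"
  define f where "f i = sl ! (i - 1)" for i
  have m1: "m \<ge> 1" using False W m_def by (simp add: Suc_leI card_gt_0_iff)
  have len: "length sl = m" by (simp add: sl_def m_def)
  have sm: "smono {1..m} f"
    unfolding smono_def f_def
  proof (intro ballI impI)
    fix x y assume "x \<in> {1..m}" "y \<in> {1..m}" "x < y"
    then show "sl ! (x - 1) < sl ! (y - 1)"
      using sorted_wrt_nth_less[OF strict_sorted_list_of_set[of W], of "x - 1" "y - 1"] len sl_def
      by simp
  qed
  have mp: "map f [1..<m+1] = sl"
    by (rule nth_equalityI) (simp_all add: len f_def del: upt_Suc)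
  have img: "f ` {1..m} = W"
  proof -
    have "{1..m} = set [1..<m+1]" by (simp only: set_upt) auto
    then have "f ` {1..m} = set (map f [1..<m+1])" by (simp only: set_map)
    also have "\<dots> = set sl" by (simp only: mp)
    finally show ?thesis using W sl_def by simp
  qed
  have "\<phi> (prod_list (map (a \<circ> f) [1..<m+1])) = (\<Sum>\<pi>\<in>NC m. kappa_pi \<kappa> \<pi> (a \<circ> f))"
    using fc m1 unfolding free_cumulants_def by blast
  moreover have "map (a \<circ> f) [1..<m+1] = map a sl" using mp by (metis map_map)
  ultimately show ?thesis
    using sum_NCon_image[OF sm, of \<kappa> a] img
    by (simp add: Aprod_def sl_def NC_NCon)
qed

definition resp :: "(nat \<Rightarrow> nat) \<Rightarrow> nat set set \<Rightarrow> bool" where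
  "resp f \<pi> \<longleftrightarrow> (\<forall>V\<in>\<pi>. \<forall>x\<in>V. \<forall>y\<in>V. f x = f y)"

lemma kappa_union:
  assumes "finite \<rho>" "finite \<tau>" "\<rho> \<inter> \<tau> = {}"
  shows "kappa_pi \<kappa> (\<rho> \<union> \<tau>) a = kappa_pi \<kappa> \<rho> a * kappa_pi \<kappa> \<tau> a"
  unfolding kappa_pi_def by (rule prod.union_disjoint[OF assms])

lemma noncrossing_mono: "noncrossing \<pi> \<Longrightarrow> \<pi>' \<subseteq> \<pi> \<Longrightarrow> noncrossing \<pi>'"
  unfolding noncrossing_def by (meson subsetD)

lemma NCon_partsD:
  assumes "\<pi> \<in> NCon U" "B \<subseteq> U" "\<forall>V\<in>\<pi>. V \<subseteq> B \<or> V \<inter> B = {}"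
  shows "{V\<in>\<pi>. V \<subseteq> B} \<in> NCon B"
proof -
  have P: "partition_on U \<pi>" and N: "noncrossing \<pi>" using assms(1) by (auto simp: NCon_def)
  have "\<Union>{V\<in>\<pi>. V \<subseteq> B} = B"
  proof
    show "\<Union>{V\<in>\<pi>. V \<subseteq> B} \<subseteq> B" by auto
    show "B \<subseteq> \<Union>{V\<in>\<pi>. V \<subseteq> B}"
    proof
      fix x assume "x \<in> B"
      then have "x \<in> \<Union>\<pi>" using partition_onD1[OF P] assms(2) by auto
      then obtain V where "V \<in> \<pi>" "x \<in> V" by auto
      then have "V \<subseteq> B" using assms(3) \<open>x \<in> B\<close> by blast
      then show "x \<in> \<Union>{V\<in>\<pi>. V \<subseteq> B}" using \<open>V \<in> \<pi>\<close> \<open>x \<in> V\<close> by blast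
    qed
  qed
  moreover have "disjoint {V\<in>\<pi>. V \<subseteq> B}"
    using partition_onD2[OF P] by (rule pairwise_subset) (rule Collect_subset)
  moreover have "{} \<notin> {V\<in>\<pi>. V \<subseteq> B}" using partition_onD3[OF P] by auto
  moreover have "noncrossing {V\<in>\<pi>. V \<subseteq> B}" using N by (rule noncrossing_mono) (rule Collect_subset)
  ultimately show ?thesis by (simp add: NCon_def partition_on_def)
qed

lemma NCon_block_ne: "\<pi> \<in> NCon U \<Longrightarrow> V \<in> \<pi> \<Longrightarrow> V \<noteq> {}"
  unfolding NCon_def partition_on_def by auto

lemma NCon_block_sub: "\<pi> \<in> NCon U \<Longrightarrow> V \<in> \<pi> \<Longrightarrow> V \<subseteq> U"
  unfolding NCon_def partition_on_def by auto

lemma NCon_fin: "finite U \<Longrightarrow> \<pi> \<in> NCon U \<Longrightarrow> finite \<pi>"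
  unfolding NCon_def using finite_elements by blast

lemma blocks_sub: "\<rho> \<in> NCon X \<Longrightarrow> V \<in> \<rho> \<Longrightarrow> V \<subseteq> X \<and> V \<noteq> {}"
  unfolding NCon_def partition_on_def by auto

lemma split_eq1:
  assumes r: "\<rho> \<in> NCon X" and t: "\<tau> \<in> NCon Y" and XY: "X \<inter> Y = {}"
  shows "{V\<in>\<rho> \<union> \<tau>. V \<subseteq> X} = \<rho>"
  using blocks_sub[OF r] blocks_sub[OF t] XY by blast

lemma split_eq2:
  assumes r: "\<rho> \<in> NCon X" and t: "\<tau> \<in> NCon Y" and XY: "X \<inter> Y = {}"
  shows "{V\<in>\<rho> \<union> \<tau>. V \<subseteq> Y} = \<tau>"
  using blocks_sub[OF r] blocks_sub[OF t] XY by blast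

lemma union_part:
  assumes r: "\<rho> \<in> NCon X" and t: "\<tau> \<in> NCon Y" and XY: "X \<inter> Y = {}"
  shows "partition_on (X \<union> Y) (\<rho> \<union> \<tau>)"
proof -
  have Pr: "partition_on X \<rho>" and Pt: "partition_on Y \<tau>" using r t by (auto simp: NCon_def)
  have "disjoint (\<rho> \<union> \<tau>)"
    by (rule disjoint_union[OF partition_onD2[OF Pr] partition_onD2[OF Pt]])
       (use partition_onD1[OF Pr] partition_onD1[OF Pt] XY in simp)
  moreover have "\<Union> (\<rho> \<union> \<tau>) = X \<union> Y" using partition_onD1[OF Pr] partition_onD1[OF Pt] by simp
  moreover have "{} \<notin> \<rho> \<union> \<tau>" using partition_onD3[OF Pr] partition_onD3[OF Pt] by simp
  ultimately show ?thesis by (simp add: partition_on_def)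
qed

lemma NC_contra:
  assumes nc: "noncrossing \<rho>" and VW: "V \<in> \<rho>" "W \<in> \<rho>" "V \<noteq> W"
    and o: "a < b" "b < c" "c < d" and m: "a \<in> V" "c \<in> V" "b \<in> W" "d \<in> W"
  shows False
proof -
  have all: "\<forall>V\<in>\<rho>. \<forall>W\<in>\<rho>. V \<noteq> W \<longrightarrow>
        \<not> (\<exists>a b c d. a < b \<and> b < c \<and> c < d \<and> a \<in> V \<and> c \<in> V \<and> b \<in> W \<and> d \<in> W)"
    using nc unfolding noncrossing_def .
  have 1: "\<forall>W\<in>\<rho>. V \<noteq> W \<longrightarrow>
        \<not> (\<exists>a b c d. a < b \<and> b < c \<and> c < d \<and> a \<in> V \<and> c \<in> V \<and> b \<in> W \<and> d \<in> W)"
    using all VW(1) by (rule bspec)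
  have 2: "V \<noteq> W \<longrightarrow>
        \<not> (\<exists>a b c d. a < b \<and> b < c \<and> c < d \<and> a \<in> V \<and> c \<in> V \<and> b \<in> W \<and> d \<in> W)"
    using 1 VW(2) by (rule bspec)
  have 3: "\<not> (\<exists>a b c d. a < b \<and> b < c \<and> c < d \<and> a \<in> V \<and> c \<in> V \<and> b \<in> W \<and> d \<in> W)"
    using 2 VW(3) by (rule mp)
  have 4: "\<exists>a b c d. a < b \<and> b < c \<and> c < d \<and> a \<in> V \<and> c \<in> V \<and> b \<in> W \<and> d \<in> W"
    apply (rule exI[of _ a], rule exI[of _ b], rule exI[of _ c], rule exI[of _ d])
    using o m by simp
  show False using 3 4 by (rule notE)
qed

lemma union_NC:
  assumes r: "\<rho> \<in> NCon X" and t: "\<tau> \<in> NCon Y"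
    and mixed: "\<And>V W a b c d. V \<in> \<rho> \<Longrightarrow> W \<in> \<tau> \<Longrightarrow> a < b \<Longrightarrow> b < c \<Longrightarrow> c < d \<Longrightarrow>
        (a \<in> V \<and> c \<in> V \<and> b \<in> W \<and> d \<in> W) \<or> (a \<in> W \<and> c \<in> W \<and> b \<in> V \<and> d \<in> V) \<Longrightarrow> False"
  shows "noncrossing (\<rho> \<union> \<tau>)"
  unfolding noncrossing_def
proof (intro ballI impI notI)
  fix V W assume V: "V \<in> \<rho> \<union> \<tau>" and W: "W \<in> \<rho> \<union> \<tau>" and ne: "V \<noteq> W"
  assume "\<exists>a b c d. a < b \<and> b < c \<and> c < d \<and> a \<in> V \<and> c \<in> V \<and> b \<in> W \<and> d \<in> W"
  then obtain a b c d where o: "a < b" "b < c" "c < d" and m: "a \<in> V" "c \<in> V" "b \<in> W" "d \<in> W"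
    by blast
  have Nr: "noncrossing \<rho>" using r by (simp add: NCon_def)
  have Nt: "noncrossing \<tau>" using t by (simp add: NCon_def)
  have m1: "(a \<in> V \<and> c \<in> V \<and> b \<in> W \<and> d \<in> W) \<or> (a \<in> W \<and> c \<in> W \<and> b \<in> V \<and> d \<in> V)"
    using m by simp
  have m2: "(a \<in> W \<and> c \<in> W \<and> b \<in> V \<and> d \<in> V) \<or> (a \<in> V \<and> c \<in> V \<and> b \<in> W \<and> d \<in> W)"
    using m by simp
  show False
  proof (cases "V \<in> \<rho>")
    case True
    show False
    proof (cases "W \<in> \<rho>")
      case True
      show False by (rule NC_contra[OF Nr \<open>V \<in> \<rho>\<close> True ne o m])
    next
      case False
      then have "W \<in> \<tau>" using W by simp
      show False by (rule mixed[OF \<open>V \<in> \<rho>\<close> \<open>W \<in> \<tau>\<close> o m1])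
    qed
  next
    case False
    then have Vt: "V \<in> \<tau>" using V by simp
    show False
    proof (cases "W \<in> \<rho>")
      case True
      show False by (rule mixed[OF True Vt o m2])
    next
      case False
      then have "W \<in> \<tau>" using W by simp
      show False by (rule NC_contra[OF Nt Vt \<open>W \<in> \<tau>\<close> ne o m])
    qed
  qed
qed

lemma glue_union:
  fixes f :: "nat \<Rightarrow> nat"
  assumes NCF: "\<And>x y z w. x \<in> U \<Longrightarrow> y \<in> U \<Longrightarrow> z \<in> U \<Longrightarrow> w \<in> U \<Longrightarrow> x < y \<Longrightarrow> y < z \<Longrightarrow> z < w
               \<Longrightarrow> f x = f z \<Longrightarrow> f y = f w \<Longrightarrow> f x = f y"
    and X: "X = {x\<in>U. f x = j}" and Y: "Y = {x\<in>U. f x \<in> J}" and jJ: "j \<notin> J"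
    and r: "\<rho> \<in> NCon X" and t: "\<tau> \<in> NCon Y" and rt: "resp f \<tau>"
  shows "\<rho> \<union> \<tau> \<in> NCon (X \<union> Y) \<and> resp f (\<rho> \<union> \<tau>)"
proof -
  have XY: "X \<inter> Y = {}" using jJ X Y by auto
  have "noncrossing (\<rho> \<union> \<tau>)"
  proof (rule union_NC[OF r t])
    fix V W a b c d assume V: "V \<in> \<rho>" and W: "W \<in> \<tau>" and o: "a < b" "b < c" "c < d"
      and mm: "(a \<in> V \<and> c \<in> V \<and> b \<in> W \<and> d \<in> W) \<or> (a \<in> W \<and> c \<in> W \<and> b \<in> V \<and> d \<in> V)"
    have VX: "V \<subseteq> X" using blocks_sub[OF r V] by blast
    have WY: "W \<subseteq> Y" using blocks_sub[OF t W] by blast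
    have fV: "\<forall>x\<in>V. x \<in> U \<and> f x = j" using VX X by blast
    have fW: "\<forall>x\<in>W. x \<in> U \<and> f x \<in> J" using WY Y by blast
    have cW: "\<forall>x\<in>W. \<forall>y\<in>W. f x = f y" using rt W unfolding resp_def by blast
    show False using mm
    proof
      assume m: "a \<in> V \<and> c \<in> V \<and> b \<in> W \<and> d \<in> W"
      have bd: "f b = f d" using cW m by blast
      have "f a = f b" by (rule NCF[of a b c d]) (use m fV fW bd o in auto)
      then show False using m fV fW jJ by auto
    next
      assume m: "a \<in> W \<and> c \<in> W \<and> b \<in> V \<and> d \<in> V"
      have ac: "f a = f c" using cW m by blast
      have "f a = f b" by (rule NCF[of a b c d]) (use m fV fW ac o in auto)
      then show False using m fV fW jJ by auto
    qed
  qed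
  moreover have "partition_on (X \<union> Y) (\<rho> \<union> \<tau>)" by (rule union_part[OF r t XY])
  moreover have "resp f (\<rho> \<union> \<tau>)"
  proof -
    have fr: "\<forall>V\<in>\<rho>. \<forall>x\<in>V. f x = j" using blocks_sub[OF r] X by blast
    show ?thesis unfolding resp_def
    proof (intro ballI)
      fix V x y assume V: "V \<in> \<rho> \<union> \<tau>" and x: "x \<in> V" and y: "y \<in> V"
      show "f x = f y"
      proof (cases "V \<in> \<rho>")
        case True then show ?thesis using fr x y by simp
      next
        case False then have "V \<in> \<tau>" using V by simp
        then show ?thesis using rt x y unfolding resp_def by blast
      qed
    qed
  qed
  ultimately show ?thesis by (simp add: NCon_def)
qed

lemma glue_split:
  fixes f :: "nat \<Rightarrow> nat"
  assumes X: "X = {x\<in>U. f x = j}" and Y: "Y = {x\<in>U. f x \<in> J}" and jJ: "j \<notin> J"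
    and pi: "\<pi> \<in> NCon (X \<union> Y)" and r: "resp f \<pi>"
  shows "{V\<in>\<pi>. V \<subseteq> X} \<in> NCon X" "{V\<in>\<pi>. V \<subseteq> Y} \<in> NCon Y" "resp f {V\<in>\<pi>. V \<subseteq> Y}"
    "{V\<in>\<pi>. V \<subseteq> X} \<union> {V\<in>\<pi>. V \<subseteq> Y} = \<pi>"
    "{V\<in>\<pi>. V \<subseteq> X} \<inter> {V\<in>\<pi>. V \<subseteq> Y} = {}"
proof -
  have XY: "X \<inter> Y = {}" using jJ X Y by auto
  have split: "\<forall>V\<in>\<pi>. V \<subseteq> X \<and> V \<inter> Y = {} \<or> V \<subseteq> Y \<and> V \<inter> X = {}"
  proof
    fix V assume V: "V \<in> \<pi>"
    obtain x where x: "x \<in> V" using blocks_sub[OF pi V] by auto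
    have sub: "V \<subseteq> X \<union> Y" using blocks_sub[OF pi V] by blast
    have fc: "\<forall>y\<in>V. f y = f x" using r V x unfolding resp_def by blast
    show "V \<subseteq> X \<and> V \<inter> Y = {} \<or> V \<subseteq> Y \<and> V \<inter> X = {}"
    proof (cases "f x = j")
      case True
      have "V \<subseteq> X"
      proof
        fix y assume "y \<in> V"
        then have "y \<in> X \<union> Y" "f y = j" using sub fc True by auto
        then show "y \<in> X" using X Y jJ by auto
      qed
      then show ?thesis using XY by auto
    next
      case False
      have "V \<subseteq> Y"
      proof
        fix y assume "y \<in> V"
        then have "y \<in> X \<union> Y" "f y \<noteq> j" using sub fc False by auto
        then show "y \<in> Y" using X Y by auto
      qed
      then show ?thesis using XY by auto
    qed
  qed
  show "{V\<in>\<pi>. V \<subseteq> X} \<in> NCon X"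
    by (rule NCon_partsD[OF pi]) (use split in auto)
  show "{V\<in>\<pi>. V \<subseteq> Y} \<in> NCon Y"
    by (rule NCon_partsD[OF pi]) (use split in auto)
  show "resp f {V\<in>\<pi>. V \<subseteq> Y}" using r unfolding resp_def by blast
  show "{V\<in>\<pi>. V \<subseteq> X} \<union> {V\<in>\<pi>. V \<subseteq> Y} = \<pi>" using split by blast
  show "{V\<in>\<pi>. V \<subseteq> X} \<inter> {V\<in>\<pi>. V \<subseteq> Y} = {}" using XY blocks_sub[OF pi] by blast
qed

lemma glue:
  fixes f :: "nat \<Rightarrow> nat" and U :: "nat set"
  assumes U: "finite U"
    and NCF: "\<And>x y z w. x \<in> U \<Longrightarrow> y \<in> U \<Longrightarrow> z \<in> U \<Longrightarrow> w \<in> U \<Longrightarrow> x < y \<Longrightarrow> y < z \<Longrightarrow> z < w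
               \<Longrightarrow> f x = f z \<Longrightarrow> f y = f w \<Longrightarrow> f x = f y"
    and J: "finite J"
  shows "(\<Prod>j\<in>J. \<Sum>\<rho>\<in>NCon {x\<in>U. f x = j}. kappa_pi \<kappa> \<rho> a)
       = (\<Sum>\<pi>\<in>{\<pi>\<in>NCon {x\<in>U. f x \<in> J}. resp f \<pi>}. kappa_pi \<kappa> \<pi> a)"
  using J
proof (induction J rule: finite_induct)
  case empty
  have "{\<pi>\<in>NCon {x\<in>U. f x \<in> {}}. resp f \<pi>} = {{}}"
    by (auto simp: NCon_empty resp_def)
  then show ?case by (simp add: kappa_pi_def)
next
  case (insert j J)
  define X where "X = {x\<in>U. f x = j}"
  define Y where "Y = {x\<in>U. f x \<in> J}"
  define T where "T = {\<pi>\<in>NCon Y. resp f \<pi>}"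
  define T' where "T' = {\<pi>\<in>NCon (X \<union> Y). resp f \<pi>}"
  have XYU: "{x\<in>U. f x \<in> insert j J} = X \<union> Y" by (auto simp: X_def Y_def)
  have finX: "finite X" and finY: "finite Y" using U by (auto simp: X_def Y_def)
  have "(\<Prod>j\<in>insert j J. \<Sum>\<rho>\<in>NCon {x\<in>U. f x = j}. kappa_pi \<kappa> \<rho> a)
      = (\<Sum>\<rho>\<in>NCon X. kappa_pi \<kappa> \<rho> a) * (\<Sum>\<tau>\<in>T. kappa_pi \<kappa> \<tau> a)"
    using insert by (simp add: X_def T_def Y_def)
  also have "\<dots> = (\<Sum>p\<in>NCon X \<times> T. kappa_pi \<kappa> (fst p) a * kappa_pi \<kappa> (snd p) a)"
    by (simp add: sum_product sum.cartesian_product case_prod_beta)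
  also have "\<dots> = (\<Sum>\<pi>\<in>T'. kappa_pi \<kappa> \<pi> a)"
  proof (rule sym, rule sum.reindex_bij_witness[where i = "\<lambda>p. fst p \<union> snd p"
        and j = "\<lambda>\<pi>. ({V\<in>\<pi>. V \<subseteq> X}, {V\<in>\<pi>. V \<subseteq> Y})"])
    fix \<pi> assume "\<pi> \<in> T'"
    then have pi: "\<pi> \<in> NCon (X \<union> Y)" and r: "resp f \<pi>" by (auto simp: T'_def)
    note gs = glue_split[OF X_def Y_def insert(2) pi r]
    show "fst ({V\<in>\<pi>. V \<subseteq> X}, {V\<in>\<pi>. V \<subseteq> Y}) \<union> snd ({V\<in>\<pi>. V \<subseteq> X}, {V\<in>\<pi>. V \<subseteq> Y}) = \<pi>"
      using gs(4) by simp
    show "({V\<in>\<pi>. V \<subseteq> X}, {V\<in>\<pi>. V \<subseteq> Y}) \<in> NCon X \<times> T"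
      using gs(1-3) by (simp add: T_def)
    have "kappa_pi \<kappa> \<pi> a = kappa_pi \<kappa> ({V\<in>\<pi>. V \<subseteq> X} \<union> {V\<in>\<pi>. V \<subseteq> Y}) a"
      using gs(4) by simp
    also have "\<dots> = kappa_pi \<kappa> {V\<in>\<pi>. V \<subseteq> X} a * kappa_pi \<kappa> {V\<in>\<pi>. V \<subseteq> Y} a"
      by (rule kappa_union[OF NCon_fin[OF finX gs(1)] NCon_fin[OF finY gs(2)] gs(5)])
    finally show "kappa_pi \<kappa> (fst ({V\<in>\<pi>. V \<subseteq> X}, {V\<in>\<pi>. V \<subseteq> Y})) a *
          kappa_pi \<kappa> (snd ({V\<in>\<pi>. V \<subseteq> X}, {V\<in>\<pi>. V \<subseteq> Y})) a = kappa_pi \<kappa> \<pi> a"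
      by simp
  next
    fix p assume "p \<in> NCon X \<times> T"
    then obtain \<rho> \<tau> where p: "p = (\<rho>, \<tau>)" and r: "\<rho> \<in> NCon X" and t: "\<tau> \<in> NCon Y" and rt: "resp f \<tau>"
      by (cases p) (auto simp: T_def)
    have XY: "X \<inter> Y = {}" using insert(2) by (auto simp: X_def Y_def)
    show "({V\<in>fst p \<union> snd p. V \<subseteq> X}, {V\<in>fst p \<union> snd p. V \<subseteq> Y}) = p"
      using split_eq1[OF r t XY] split_eq2[OF r t XY] p by simp
    have "\<rho> \<union> \<tau> \<in> NCon (X \<union> Y) \<and> resp f (\<rho> \<union> \<tau>)"
      by (rule glue_union[OF NCF X_def Y_def insert(2) r t rt])
    then show "fst p \<union> snd p \<in> T'" using p by (simp add: T'_def)
  qed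
  also have "T' = {\<pi>\<in>NCon {x\<in>U. f x \<in> insert j J}. resp f \<pi>}" by (simp only: T'_def XYU)
  finally show ?case .
qed

lemma cnt_split:
  assumes "finite S" "x \<le> y"
  shows "cnt S y = cnt S x + card {s\<in>S. x \<le> s \<and> s < y}"
proof -
  have "{s\<in>S. s < y} = {s\<in>S. s < x} \<union> {s\<in>S. x \<le> s \<and> s < y}" using assms by auto
  moreover have "{s\<in>S. s < x} \<inter> {s\<in>S. x \<le> s \<and> s < y} = {}" by auto
  ultimately show ?thesis unfolding cnt_def using assms(1)
    by (simp add: card_Un_disjoint)
qed

lemma blk_eq:
  assumes fin: "finite S" and xy: "x \<le> y"
  shows "blk S x = blk S y \<longleftrightarrow> (\<forall>s\<in>S. s < x \<or> y \<le> s) \<or> (\<forall>s\<in>S. x \<le> s \<and> s < y)"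
proof -
  define cx where "cx = cnt S x"
  define cy where "cy = cnt S y"
  define k where "k = card S"
  have le: "cx \<le> cy" "cy \<le> k" using cnt_mono[OF fin xy] cnt_le[OF fin] by (auto simp: cx_def cy_def k_def)
  have b: "blk S x = blk S y \<longleftrightarrow> cx = cy \<or> (cx = 0 \<and> cy = k)"
    using le unfolding blk_def cx_def[symmetric] cy_def[symmetric] k_def[symmetric] by auto
  have mid: "cx = cy \<longleftrightarrow> (\<forall>s\<in>S. s < x \<or> y \<le> s)"
  proof -
    have "cx = cy \<longleftrightarrow> card {s\<in>S. x \<le> s \<and> s < y} = 0"
      using cnt_split[OF fin xy] by (simp add: cx_def cy_def)
    also have "\<dots> \<longleftrightarrow> {s\<in>S. x \<le> s \<and> s < y} = {}" using fin by simp
    also have "\<dots> \<longleftrightarrow> (\<forall>s\<in>S. s < x \<or> y \<le> s)" by (auto simp: not_le[symmetric])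
    finally show ?thesis .
  qed
  have c0: "cx = 0 \<longleftrightarrow> (\<forall>s\<in>S. x \<le> s)"
  proof -
    have "cx = 0 \<longleftrightarrow> {s\<in>S. s < x} = {}" using fin by (simp add: cx_def cnt_def)
    also have "\<dots> \<longleftrightarrow> (\<forall>s\<in>S. x \<le> s)" by auto
    finally show ?thesis .
  qed
  have ck: "cy = k \<longleftrightarrow> (\<forall>s\<in>S. s < y)"
  proof -
    have "cy = k \<longleftrightarrow> {s\<in>S. s < y} = S"
    proof
      assume "cy = k"
      then have "card {s\<in>S. s < y} = card S" by (simp add: cy_def k_def cnt_def)
      then show "{s\<in>S. s < y} = S" using fin by (metis (no_types, lifting) card_subset_eq mem_Collect_eq subsetI)
    next
      assume "{s\<in>S. s < y} = S"
      then show "cy = k" by (simp add: cy_def k_def cnt_def)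
    qed
    also have "\<dots> \<longleftrightarrow> (\<forall>s\<in>S. s < y)" by auto
    finally show ?thesis .
  qed
  show ?thesis using b mid c0 ck by auto
qed

lemma NCF_blk:
  assumes fin: "finite S" and o: "x < y" "y < z" "z < w"
    and e1: "blk S x = blk S z" and e2: "blk S y = blk S w"
  shows "blk S x = blk S y"
proof -
  have A: "(\<forall>s\<in>S. s < x \<or> z \<le> s) \<or> (\<forall>s\<in>S. x \<le> s \<and> s < z)"
    using e1 blk_eq[OF fin, of x z] o by simp
  have B: "(\<forall>s\<in>S. s < y \<or> w \<le> s) \<or> (\<forall>s\<in>S. y \<le> s \<and> s < w)"
    using e2 blk_eq[OF fin, of y w] o by simp
  have "(\<forall>s\<in>S. s < x \<or> y \<le> s) \<or> (\<forall>s\<in>S. x \<le> s \<and> s < y)"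
  proof (cases "\<forall>s\<in>S. s < x \<or> z \<le> s")
    case True
    then show ?thesis using o by force
  next
    case False
    then have A2: "\<forall>s\<in>S. x \<le> s \<and> s < z" using A by blast
    show ?thesis
    proof (cases "\<forall>s\<in>S. s < y \<or> w \<le> s")
      case True
      then have "\<forall>s\<in>S. x \<le> s \<and> s < y" using A2 o by force
      then show ?thesis by blast
    next
      case False
      then have "\<forall>s\<in>S. y \<le> s \<and> s < w" using B by blast
      then show ?thesis by blast
    qed
  qed
  then show ?thesis using blk_eq[OF fin, of x y] o by simp
qed

definition cond1 :: "nat set set \<Rightarrow> nat \<Rightarrow> nat \<Rightarrow> bool" where
  "cond1 \<pi> s t \<longleftrightarrow> (\<forall>V\<in>\<pi>. \<forall>x\<in>V. \<forall>y\<in>V. (s < x \<and> x \<le> t) = (s < y \<and> y \<le> t))"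

definition Cset :: "nat set set \<Rightarrow> nat \<Rightarrow> nat \<Rightarrow> nat set" where
  "Cset \<pi> s t = {c. s < c \<and> c < t \<and> \<not> (\<exists>V\<in>\<pi>. \<exists>x\<in>V. \<exists>y\<in>V. s < x \<and> y \<le> t \<and> x \<le> c \<and> c < y)}"

lemma pair_char:
  assumes st: "s < t" and T: "T \<subseteq> {s<..<t}" and xy: "x \<le> y"
  shows "blk (insert s (insert t T)) x = blk (insert s (insert t T)) y \<longleftrightarrow>
     ((s < x \<and> x \<le> t) = (s < y \<and> y \<le> t)) \<and> (s < x \<and> y \<le> t \<longrightarrow> (\<forall>u\<in>T. u < x \<or> y \<le> u))"
proof -
  have finT: "finite T" using T finite_subset by blast
  have fin: "finite (insert s (insert t T))" using finT by simp
  have Tb: "\<forall>u\<in>T. s < u \<and> u < t" using T by auto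
  have e: "blk (insert s (insert t T)) x = blk (insert s (insert t T)) y \<longleftrightarrow>
     ((s < x \<or> y \<le> s) \<and> (t < x \<or> y \<le> t) \<and> (\<forall>u\<in>T. u < x \<or> y \<le> u)) \<or>
     ((x \<le> s \<and> s < y) \<and> (x \<le> t \<and> t < y) \<and> (\<forall>u\<in>T. x \<le> u \<and> u < y))"
    using blk_eq[OF fin xy] by simp
  show ?thesis
  proof (cases "s < x \<and> x \<le> t")
    case ix: True
    show ?thesis
    proof (cases "s < y \<and> y \<le> t")
      case True
      then show ?thesis using e ix by auto
    next
      case False
      then have "t < y" using ix xy by auto
      then show ?thesis using e ix by auto
    qed
  next
    case nx: False
    show ?thesis
    proof (cases "s < y \<and> y \<le> t")
      case True
      then have "x \<le> s" using nx xy by auto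
      then show ?thesis using e True by auto
    next
      case ny: False
      have "((s < x \<or> y \<le> s) \<and> (t < x \<or> y \<le> t) \<and> (\<forall>u\<in>T. u < x \<or> y \<le> u)) \<or>
        ((x \<le> s \<and> s < y) \<and> (x \<le> t \<and> t < y) \<and> (\<forall>u\<in>T. x \<le> u \<and> u < y))"
      proof (cases "y \<le> s")
        case True
        then have "\<forall>u\<in>T. u < x \<or> y \<le> u" using Tb by force
        then show ?thesis using True st by auto
      next
        case ys: False
        show ?thesis
        proof (cases "t < x")
          case True
          then have "\<forall>u\<in>T. u < x \<or> y \<le> u" using Tb by force
          then show ?thesis using True st by auto
        next
          case False
          then have "x \<le> s" "t < y" using nx ny ys by auto
          moreover then have "\<forall>u\<in>T. x \<le> u \<and> u < y" using Tb by force
          ultimately show ?thesis using st by auto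
        qed
      qed
      then show ?thesis using e nx ny by auto
    qed
  qed
qed

lemma blk_sym_pairs:
  fixes V :: "nat set"
  assumes "\<And>x y. x \<in> V \<Longrightarrow> y \<in> V \<Longrightarrow> x \<le> y \<Longrightarrow> P x y"
    and "\<And>x y. P x y \<Longrightarrow> P y x"
  shows "\<forall>x\<in>V. \<forall>y\<in>V. P x y"
proof (intro ballI)
  fix x y assume x: "x \<in> V" and y: "y \<in> V"
  show "P x y"
  proof (cases "x \<le> y")
    case True then show ?thesis using assms(1)[OF x y] by simp
  next
    case False then have "y \<le> x" by simp
    then have "P y x" using assms(1)[OF y x] by simp
    then show ?thesis by (rule assms(2))
  qed
qed

lemma resp_char:
  assumes st: "s < t" and T: "T \<subseteq> {s<..<t}"
  shows "resp (blk (insert s (insert t T))) \<pi> \<longleftrightarrow> cond1 \<pi> s t \<and> T \<subseteq> Cset \<pi> s t"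
proof -
  define B where "B = blk (insert s (insert t T))"
  have pc: "\<And>x y. x \<le> y \<Longrightarrow> B x = B y \<longleftrightarrow>
     ((s < x \<and> x \<le> t) = (s < y \<and> y \<le> t)) \<and> (s < x \<and> y \<le> t \<longrightarrow> (\<forall>u\<in>T. u < x \<or> y \<le> u))"
    unfolding B_def by (rule pair_char[OF st T])
  show ?thesis unfolding B_def[symmetric]
  proof
    assume r: "resp B \<pi>"
    have c1: "cond1 \<pi> s t"
      unfolding cond1_def
    proof (intro ballI)
      fix V x y assume V: "V \<in> \<pi>" and x: "x \<in> V" and y: "y \<in> V"
      have "B x = B y" using r V x y unfolding resp_def by blast
      show "(s < x \<and> x \<le> t) = (s < y \<and> y \<le> t)"
      proof (cases "x \<le> y")
        case True then show ?thesis using pc[OF True] \<open>B x = B y\<close> by blast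
      next
        case False then have "y \<le> x" by simp
        then show ?thesis using pc[OF \<open>y \<le> x\<close>] \<open>B x = B y\<close> by (metis (full_types))
      qed
    qed
    have "T \<subseteq> Cset \<pi> s t"
    proof
      fix c assume c: "c \<in> T"
      then have sc: "s < c" "c < t" using T by auto
      have "\<not> (\<exists>V\<in>\<pi>. \<exists>x\<in>V. \<exists>y\<in>V. s < x \<and> y \<le> t \<and> x \<le> c \<and> c < y)"
      proof
        assume "\<exists>V\<in>\<pi>. \<exists>x\<in>V. \<exists>y\<in>V. s < x \<and> y \<le> t \<and> x \<le> c \<and> c < y"
        then obtain V x y where V: "V \<in> \<pi>" "x \<in> V" "y \<in> V" and h: "s < x" "y \<le> t" "x \<le> c" "c < y"
          by blast
        have "B x = B y" using r V unfolding resp_def by blast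
        then have "\<forall>u\<in>T. u < x \<or> y \<le> u" using pc[of x y] h by auto
        then show False using c h by auto
      qed
      then show "c \<in> Cset \<pi> s t" using sc by (simp add: Cset_def)
    qed
    then show "cond1 \<pi> s t \<and> T \<subseteq> Cset \<pi> s t" using c1 by simp
  next
    assume h: "cond1 \<pi> s t \<and> T \<subseteq> Cset \<pi> s t"
    show "resp B \<pi>"
      unfolding resp_def
    proof
      fix V assume V: "V \<in> \<pi>"
      show "\<forall>x\<in>V. \<forall>y\<in>V. B x = B y"
      proof (rule blk_sym_pairs)
        fix x y assume x: "x \<in> V" and y: "y \<in> V" and xy: "x \<le> y"
        have a: "(s < x \<and> x \<le> t) = (s < y \<and> y \<le> t)" using h V x y unfolding cond1_def by blast
        have b: "s < x \<and> y \<le> t \<longrightarrow> (\<forall>u\<in>T. u < x \<or> y \<le> u)"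
        proof (intro impI ballI)
          fix u assume sxy: "s < x \<and> y \<le> t" and u: "u \<in> T"
          have "u \<in> Cset \<pi> s t" using h u by blast
          then have "\<not> (x \<le> u \<and> u < y)" using V x y sxy unfolding Cset_def by blast
          then show "u < x \<or> y \<le> u" by auto
        qed
        show "B x = B y" using pc[OF xy] a b by blast
      next
        fix x y assume "B x = B y" then show "B y = B x" by simp
      qed
    qed
  qed
qed

lemma alt_sum:
  assumes "finite C"
  shows "(\<Sum>T\<in>Pow C. (-1::int) ^ card T) = (if C = {} then 1 else 0)"
  using assms
proof (induction C rule: finite_induct)
  case empty
  then show ?case by simp
next
  case (insert x C)
  have inj: "inj_on (insert x) (Pow C)"
  proof (rule inj_onI)
    fix A B assume "A \<in> Pow C" "B \<in> Pow C" "insert x A = insert x B"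
    moreover then have "x \<notin> A" "x \<notin> B" using insert(2) by auto
    ultimately show "A = B" by (simp add: insert_ident)
  qed
  have disj: "Pow C \<inter> insert x ` Pow C = {}" using insert(2) by auto
  have "(\<Sum>T\<in>Pow (insert x C). (-1::int) ^ card T)
      = (\<Sum>T\<in>Pow C. (-1::int) ^ card T) + (\<Sum>T\<in>Pow C. (-1::int) ^ card (insert x T))"
    unfolding Pow_insert
    by (subst sum.union_disjoint) (use disj inj insert(1) in \<open>auto simp: sum.reindex\<close>)
  also have "(\<Sum>T\<in>Pow C. (-1::int) ^ card (insert x T)) = - (\<Sum>T\<in>Pow C. (-1::int) ^ card T)"
  proof -
    have "\<And>T. T \<in> Pow C \<Longrightarrow> (-1::int) ^ card (insert x T) = - ((-1) ^ card T)"
    proof -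
      fix T assume "T \<in> Pow C"
      then have "x \<notin> T" "finite T" using insert(1,2) finite_subset by auto
      then show "(-1::int) ^ card (insert x T) = - ((-1) ^ card T)" by simp
    qed
    then show ?thesis by (simp add: sum_negf)
  qed
  finally show ?case by simp
qed

lemma NCon_cover: "\<pi> \<in> NCon U \<Longrightarrow> x \<in> U \<Longrightarrow> \<exists>V\<in>\<pi>. x \<in> V"
  unfolding NCon_def partition_on_def by auto

lemma NCon_disj: "\<pi> \<in> NCon U \<Longrightarrow> V \<in> \<pi> \<Longrightarrow> W \<in> \<pi> \<Longrightarrow> x \<in> V \<Longrightarrow> x \<in> W \<Longrightarrow> V = W"
  unfolding NCon_def partition_on_def disjoint_def by blast

lemma NCon_nc: "\<pi> \<in> NCon U \<Longrightarrow> noncrossing \<pi>"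
  unfolding NCon_def by simp

lemma block_facts:
  assumes pi: "\<pi> \<in> NCon {1..n}" and V: "V \<in> \<pi>"
  shows "finite V" "V \<noteq> {}" "V \<subseteq> {1..n}" "Min V \<in> V" "Max V \<in> V" "1 \<le> Min V"
    "\<And>v. v \<in> V \<Longrightarrow> Min V \<le> v \<and> v \<le> Max V" "Max V \<le> n"
proof -
  show sub: "V \<subseteq> {1..n}" and ne: "V \<noteq> {}" using blocks_sub[OF pi V] by auto
  show fin: "finite V" using sub finite_subset by blast
  show "Min V \<in> V" using fin ne by simp
  show "Max V \<in> V" using fin ne by simp
  then show "Max V \<le> n" using sub by auto
  show "1 \<le> Min V" using \<open>Min V \<in> V\<close> sub by auto
  show "\<And>v. v \<in> V \<Longrightarrow> Min V \<le> v \<and> v \<le> Max V" using fin by simp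
qed

lemma pairs_blocks:
  assumes pi: "\<pi> \<in> NCon {1..n}"
  shows "{p \<in> {(s, t). s < t \<and> t \<le> n}. cond1 \<pi> (fst p) (snd p) \<and> Cset \<pi> (fst p) (snd p) = {}}
         = (\<lambda>V. (Min V - 1, Max V)) ` \<pi>"
proof
  have N: "noncrossing \<pi>" using NCon_nc[OF pi] .
  show "(\<lambda>V. (Min V - 1, Max V)) ` \<pi> \<subseteq> {p \<in> {(s, t). s < t \<and> t \<le> n}. cond1 \<pi> (fst p) (snd p) \<and> Cset \<pi> (fst p) (snd p) = {}}"
  proof
    fix p assume "p \<in> (\<lambda>V. (Min V - 1, Max V)) ` \<pi>"
    then obtain V where V: "V \<in> \<pi>" and p: "p = (Min V - 1, Max V)" by blast
    note bf = block_facts[OF pi V]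
    define s where "s = Min V - 1"
    define t where "t = Max V"
    have sMin: "Min V = Suc s" using bf(6) s_def by simp
    have st: "s < t" using bf(7)[OF bf(4)] sMin t_def by simp
    have tn: "t \<le> n" using bf(8) t_def by simp
    have inV: "\<And>v. v \<in> V \<Longrightarrow> s < v \<and> v \<le> t" using bf(7) sMin t_def by fastforce
    have c1: "cond1 \<pi> s t"
      unfolding cond1_def
    proof (intro ballI)
      fix W x y assume W: "W \<in> \<pi>" and x: "x \<in> W" and y: "y \<in> W"
      show "(s < x \<and> x \<le> t) = (s < y \<and> y \<le> t)"
      proof (rule ccontr)
        assume ne: "(s < x \<and> x \<le> t) \<noteq> (s < y \<and> y \<le> t)"
        have gen: False if u: "u \<in> W" "s < u" "u \<le> t" and w: "w \<in> W" "\<not> (s < w \<and> w \<le> t)" for u w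
        proof -
          have WV: "W \<noteq> V" using w inV by blast
          have "u \<notin> V" using NCon_disj[OF pi V W _ u(1)] WV by blast
          then have u1: "Min V < u" "u < Max V" using u sMin t_def bf(4) bf(5)
            by (metis Suc_leI le_neq_implies_less)+
          show False
          proof (cases "w \<le> s")
            case True
            then have "w < Min V" using sMin by simp
            show False by (rule NC_contra[OF N W V WV \<open>w < Min V\<close> u1(1) u1(2) w(1) u(1) bf(4) bf(5)])
          next
            case False
            then have "Max V < w" using w(2) t_def by simp
            show False by (rule NC_contra[OF N V W WV[symmetric] u1(1) u1(2) \<open>Max V < w\<close> bf(4) bf(5) u(1) w(1)])
          qed
        qed
        show False
        proof (cases "s < x \<and> x \<le> t")
          case True
          then show False using gen[of x y] x y ne by blast
        next
          case False
          then show False using gen[of y x] x y ne by blast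
        qed
      qed
    qed
    have c2: "Cset \<pi> s t = {}"
    proof -
      have "c \<notin> Cset \<pi> s t" for c
      proof
        assume "c \<in> Cset \<pi> s t"
        then have c: "s < c" "c < t" and no: "\<not> (\<exists>V\<in>\<pi>. \<exists>x\<in>V. \<exists>y\<in>V. s < x \<and> y \<le> t \<and> x \<le> c \<and> c < y)"
          unfolding Cset_def by auto
        have "s < Min V" "Max V \<le> t" "Min V \<le> c" "c < Max V" using c sMin t_def by auto
        then show False using no V bf(4) bf(5) by blast
      qed
      then show ?thesis by blast
    qed
    show "p \<in> {p \<in> {(s, t). s < t \<and> t \<le> n}. cond1 \<pi> (fst p) (snd p) \<and> Cset \<pi> (fst p) (snd p) = {}}"
      using p st tn c1 c2 s_def t_def by simp
  qed
next
  have N: "noncrossing \<pi>" using NCon_nc[OF pi] .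
  show "{p \<in> {(s, t). s < t \<and> t \<le> n}. cond1 \<pi> (fst p) (snd p) \<and> Cset \<pi> (fst p) (snd p) = {}}
         \<subseteq> (\<lambda>V. (Min V - 1, Max V)) ` \<pi>"
  proof
    fix p assume "p \<in> {p \<in> {(s, t). s < t \<and> t \<le> n}. cond1 \<pi> (fst p) (snd p) \<and> Cset \<pi> (fst p) (snd p) = {}}"
    then obtain s t where p: "p = (s, t)" and st: "s < t" "t \<le> n" and c1: "cond1 \<pi> s t"
      and c2: "Cset \<pi> s t = {}" by auto
    have "Suc s \<in> {1..n}" using st by auto
    then obtain V where V: "V \<in> \<pi>" and sV: "Suc s \<in> V" using NCon_cover[OF pi] by blast
    note bf = block_facts[OF pi V]
    have inV: "\<And>v. v \<in> V \<Longrightarrow> s < v \<and> v \<le> t"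
    proof -
      fix v assume "v \<in> V"
      have "(s < Suc s \<and> Suc s \<le> t) = (s < v \<and> v \<le> t)" using c1 V sV \<open>v \<in> V\<close> unfolding cond1_def by blast
      then show "s < v \<and> v \<le> t" using st by simp
    qed
    have mn: "Min V = Suc s"
    proof -
      have "Min V \<le> Suc s" using bf(7)[OF sV] by simp
      moreover have "s < Min V" using inV[OF bf(4)] by simp
      ultimately show ?thesis by simp
    qed
    have mx: "Max V = t"
    proof (rule ccontr)
      assume "Max V \<noteq> t"
      then have lt: "Max V < t" using inV[OF bf(5)] by simp
      have "Max V \<in> Cset \<pi> s t"
        unfolding Cset_def
      proof (intro CollectI conjI notI)
        show "s < Max V" using inV[OF bf(5)] by simp
        show "Max V < t" by (rule lt)
        assume "\<exists>W\<in>\<pi>. \<exists>x\<in>W. \<exists>y\<in>W. s < x \<and> y \<le> t \<and> x \<le> Max V \<and> Max V < y"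
        then obtain W x y where W: "W \<in> \<pi>" "x \<in> W" "y \<in> W" and h: "s < x" "y \<le> t" "x \<le> Max V" "Max V < y"
          by blast
        have WV: "W \<noteq> V" using h(4) W(3) bf(7) by fastforce
        have xnV: "x \<notin> V" using NCon_disj[OF pi V W(1) _ W(2)] WV by blast
        then have "x \<noteq> Suc s" "x \<noteq> Max V" using sV bf(5) by auto
        then have "Suc s < x" "x < Max V" using h by auto
        show False by (rule NC_contra[OF N V W(1) WV[symmetric] \<open>Suc s < x\<close> \<open>x < Max V\<close> h(4) sV bf(5) W(2) W(3)])
      qed
      then show False using c2 by simp
    qed
    show "p \<in> (\<lambda>V. (Min V - 1, Max V)) ` \<pi>"
      using p mn mx V by (intro image_eqI[of _ _ V]) auto
  qed
qed

lemma pairs_inj: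
  assumes pi: "\<pi> \<in> NCon {1..n}"
  shows "inj_on (\<lambda>V. (Min V - 1, Max V)) \<pi>"
proof (rule inj_onI)
  fix V W assume V: "V \<in> \<pi>" and W: "W \<in> \<pi>" and e: "(Min V - 1, Max V) = (Min W - 1, Max W)"
  have "Min V = Min W" using e block_facts(6)[OF pi V] block_facts(6)[OF pi W] by (simp, arith)
  then show "V = W" using NCon_disj[OF pi V W] block_facts(4)[OF pi V] block_facts(4)[OF pi W] by simp
qed

lemma resp_single: "resp (blk {x}) \<pi>"
proof -
  have "blk {x} y = 0" for y
    using cnt_le[of "{x}" y] by (auto simp: blk_def)
  then show ?thesis by (simp add: resp_def)
qed

lemma minmax_ins:
  fixes s t :: nat
  assumes "s < t" "T \<subseteq> {s<..<t}"
  shows "Min (insert s (insert t T)) = s" "Max (insert s (insert t T)) = t"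
    "insert s (insert t T) - {s, t} = T" "card (insert s (insert t T)) = card T + 2"
proof -
  have fin: "finite T" using finite_subset[OF assms(2)] by simp
  have Tb: "\<forall>u\<in>T. s < u \<and> u < t" using assms(2) by auto
  have fin2: "finite (insert s (insert t T))" using fin by simp
  have lo: "\<And>y. y \<in> insert s (insert t T) \<Longrightarrow> s \<le> y" using Tb assms(1) by fastforce
  have hi: "\<And>y. y \<in> insert s (insert t T) \<Longrightarrow> y \<le> t" using Tb assms(1) by fastforce
  show "Min (insert s (insert t T)) = s"
    by (rule Min_eqI[OF fin2 lo]) simp_all
  show "Max (insert s (insert t T)) = t"
    by (rule Max_eqI[OF fin2 hi]) simp_all
  show "insert s (insert t T) - {s, t} = T" using Tb by auto
  have "s \<notin> insert t T" "t \<notin> T" using Tb assms(1) by auto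
  then show "card (insert s (insert t T)) = card T + 2" using fin by simp
qed

lemma minmax_set:
  fixes S :: "nat set"
  assumes fin: "finite S" and c: "2 \<le> card S"
  shows "Min S < Max S" "S - {Min S, Max S} \<subseteq> {Min S<..<Max S}"
    "insert (Min S) (insert (Max S) (S - {Min S, Max S})) = S"
proof -
  have ne: "S \<noteq> {}" using c by auto
  have mi: "Min S \<in> S" and ma: "Max S \<in> S" using fin ne by auto
  have "Min S \<noteq> Max S"
  proof
    assume e: "Min S = Max S"
    have "S \<subseteq> {Min S}"
    proof
      fix x assume "x \<in> S"
      then have "Min S \<le> x" "x \<le> Max S" using fin by auto
      then show "x \<in> {Min S}" using e by simp
    qed
    then have "card S \<le> card {Min S}" by (rule card_mono[rotated]) simp
    then have "card S \<le> 1" by simp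
    then show False using c by simp
  qed
  moreover have "Min S \<le> Max S" using fin ne by (simp add: mi)
  ultimately show "Min S < Max S" by simp
  show "S - {Min S, Max S} \<subseteq> {Min S<..<Max S}"
  proof
    fix x assume "x \<in> S - {Min S, Max S}"
    then have "x \<in> S" "x \<noteq> Min S" "x \<noteq> Max S" by auto
    moreover have "Min S \<le> x" "x \<le> Max S" using \<open>x \<in> S\<close> fin by auto
    ultimately show "x \<in> {Min S<..<Max S}" by auto
  qed
  show "insert (Min S) (insert (Max S) (S - {Min S, Max S})) = S" using mi ma by auto
qed

lemma comb_main:
  assumes pi: "\<pi> \<in> NCon {1..n}"
  shows "(\<Sum>S\<in>Pow {0..n} - {{}}. if resp (blk S) \<pi> then (-1::int) ^ card S else 0)
         = int (card \<pi>) - int (n + 1)"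
proof -
  define F where "F S = (if resp (blk S) \<pi> then (-1::int) ^ card S else 0)" for S
  define A1 where "A1 = (\<lambda>x. {x}) ` {0..n}"
  define A2 where "A2 = {S\<in>Pow {0..n}. 2 \<le> card S}"
  define P where "P = {(s, t). s < t \<and> t \<le> (n::nat)}"
  define Sig where "Sig = Sigma P (\<lambda>p. Pow {fst p<..<snd p})"
  define G where "G q = (if cond1 \<pi> (fst (fst q)) (snd (fst q)) \<and> snd q \<subseteq> Cset \<pi> (fst (fst q)) (snd (fst q))
                          then (-1::int) ^ card (snd q) else 0)" for q
  have finP: "finite P"
    by (rule finite_subset[of _ "{0..n} \<times> {0..n}"]) (auto simp: P_def)
  have split: "Pow {0..n} - {{}} = A1 \<union> A2"
  proof
    show "Pow {0..n} - {{}} \<subseteq> A1 \<union> A2"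
    proof
      fix S assume S: "S \<in> Pow {0..n} - {{}}"
      then have fin: "finite S" and ne: "S \<noteq> {}" using finite_subset by auto
      show "S \<in> A1 \<union> A2"
      proof (cases "card S = 1")
        case True
        then obtain x where "S = {x}" by (auto simp: card_1_singleton_iff)
        then show ?thesis using S by (auto simp: A1_def)
      next
        case False
        then have "2 \<le> card S" using fin ne by (metis One_nat_def Suc_1 Suc_leI card_gt_0_iff le_neq_implies_less)
        then show ?thesis using S by (auto simp: A2_def)
      qed
    qed
    show "A1 \<union> A2 \<subseteq> Pow {0..n} - {{}}" by (auto simp: A1_def A2_def)
  qed
  have disj: "A1 \<inter> A2 = {}" by (auto simp: A1_def A2_def)
  have finA: "finite A1" "finite A2" by (auto simp: A1_def A2_def)
  have s1: "sum F A1 = - int (n + 1)"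
  proof -
    have "sum F A1 = (\<Sum>x\<in>{0..n}. F {x})"
      unfolding A1_def by (subst sum.reindex) (auto simp: inj_on_def)
    also have "\<dots> = (\<Sum>x\<in>{0..n}. -1)" by (rule sum.cong) (auto simp: F_def resp_single)
    finally show ?thesis by simp
  qed
  have s2: "sum F A2 = sum G Sig"
  proof (rule sym, rule sum.reindex_bij_witness[where j = "\<lambda>q. insert (fst (fst q)) (insert (snd (fst q)) (snd q))"
        and i = "\<lambda>S. ((Min S, Max S), S - {Min S, Max S})"])
    fix q assume q: "q \<in> Sig"
    then obtain s t T where qe: "q = ((s, t), T)" and st: "s < t" "t \<le> n" and T: "T \<subseteq> {s<..<t}"
      by (auto simp: Sig_def P_def)
    note mm = minmax_ins[OF st(1) T]
    show "((Min (insert (fst (fst q)) (insert (snd (fst q)) (snd q))), Max (insert (fst (fst q)) (insert (snd (fst q)) (snd q)))),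
           insert (fst (fst q)) (insert (snd (fst q)) (snd q)) -
           {Min (insert (fst (fst q)) (insert (snd (fst q)) (snd q))), Max (insert (fst (fst q)) (insert (snd (fst q)) (snd q)))}) = q"
      using mm qe by simp
    show "insert (fst (fst q)) (insert (snd (fst q)) (snd q)) \<in> A2"
      using mm qe st T by (auto simp: A2_def)
    show "F (insert (fst (fst q)) (insert (snd (fst q)) (snd q))) = G q"
      using mm qe resp_char[OF st(1) T] by (simp add: F_def G_def)
  next
    fix S assume S: "S \<in> A2"
    then have fin: "finite S" and c: "2 \<le> card S" and Sn: "S \<subseteq> {0..n}"
      using finite_subset by (auto simp: A2_def)
    note mm = minmax_set[OF fin c]
    show "insert (fst (fst ((Min S, Max S), S - {Min S, Max S}))) (insert (snd (fst ((Min S, Max S), S - {Min S, Max S})))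
       (snd ((Min S, Max S), S - {Min S, Max S}))) = S"
      using mm by simp
    have "Max S \<le> n" using Sn Max_in[OF fin] c by fastforce
    then show "((Min S, Max S), S - {Min S, Max S}) \<in> Sig"
      using mm by (auto simp: Sig_def P_def)
  qed
  have s3: "sum G Sig = (\<Sum>p\<in>P. if cond1 \<pi> (fst p) (snd p) \<and> Cset \<pi> (fst p) (snd p) = {} then 1 else 0)"
  proof -
    have "sum G Sig = (\<Sum>p\<in>P. \<Sum>T\<in>Pow {fst p<..<snd p}. G (p, T))"
    proof -
      have "(\<Sum>p\<in>P. \<Sum>T\<in>Pow {fst p<..<snd p}. G (p, T)) = sum (\<lambda>(p, T). G (p, T)) Sig"
        unfolding Sig_def by (rule sum.Sigma) (use finP in auto)
      then show ?thesis by simp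
    qed
    also have "\<dots> = (\<Sum>p\<in>P. if cond1 \<pi> (fst p) (snd p) \<and> Cset \<pi> (fst p) (snd p) = {} then 1 else 0)"
    proof (rule sum.cong[OF refl])
      fix p assume "p \<in> P"
      define C where "C = Cset \<pi> (fst p) (snd p)"
      have CI: "C \<subseteq> {fst p<..<snd p}" by (auto simp: C_def Cset_def)
      have finC: "finite C" using finite_subset[OF CI] by simp
      show "(\<Sum>T\<in>Pow {fst p<..<snd p}. G (p, T)) =
            (if cond1 \<pi> (fst p) (snd p) \<and> Cset \<pi> (fst p) (snd p) = {} then 1 else 0)"
      proof (cases "cond1 \<pi> (fst p) (snd p)")
        case False
        then show ?thesis by (simp add: G_def)
      next
        case True
        have "(\<Sum>T\<in>Pow {fst p<..<snd p}. G (p, T)) = (\<Sum>T\<in>Pow {fst p<..<snd p}. if T \<subseteq> C then (-1::int) ^ card T else 0)"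
          by (rule sum.cong) (auto simp: G_def True C_def)
        also have "\<dots> = (\<Sum>T\<in>{T\<in>Pow {fst p<..<snd p}. T \<subseteq> C}. (-1::int) ^ card T)"
          by (rule sum.inter_filter[symmetric]) simp
        also have "{T\<in>Pow {fst p<..<snd p}. T \<subseteq> C} = Pow C" using CI by auto
        also have "(\<Sum>T\<in>Pow C. (-1::int) ^ card T) = (if C = {} then 1 else 0)" by (rule alt_sum[OF finC])
        finally show ?thesis using True by (simp add: C_def)
      qed
    qed
    finally show ?thesis .
  qed
  have s4: "(\<Sum>p\<in>P. if cond1 \<pi> (fst p) (snd p) \<and> Cset \<pi> (fst p) (snd p) = {} then 1 else 0) = int (card \<pi>)"
  proof -
    have "(\<Sum>p\<in>P. if cond1 \<pi> (fst p) (snd p) \<and> Cset \<pi> (fst p) (snd p) = {} then 1 else (0::int))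
        = (\<Sum>p\<in>{p\<in>P. cond1 \<pi> (fst p) (snd p) \<and> Cset \<pi> (fst p) (snd p) = {}}. 1)"
      by (rule sum.inter_filter[symmetric, OF finP])
    also have "\<dots> = int (card {p\<in>P. cond1 \<pi> (fst p) (snd p) \<and> Cset \<pi> (fst p) (snd p) = {}})" by simp
    also have "{p\<in>P. cond1 \<pi> (fst p) (snd p) \<and> Cset \<pi> (fst p) (snd p) = {}} = (\<lambda>V. (Min V - 1, Max V)) ` \<pi>"
      unfolding P_def by (rule pairs_blocks[OF pi])
    also have "card ((\<lambda>V. (Min V - 1, Max V)) ` \<pi>) = card \<pi>" by (rule card_image[OF pairs_inj[OF pi]])
    finally show ?thesis .
  qed
  have "(\<Sum>S\<in>Pow {0..n} - {{}}. F S) = sum F A1 + sum F A2"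
    unfolding split by (rule sum.union_disjoint[OF finA disj])
  also have "\<dots> = int (card \<pi>) - int (n + 1)" using s1 s2 s3 s4 by simp
  finally show ?thesis unfolding F_def .
qed

lemma additive_sum:
  fixes \<Phi> :: "'b::ab_group_add \<Rightarrow> complex"
  assumes add: "\<And>x y. \<Phi> (x + y) = \<Phi> x + (\<Phi> y :: complex)"
  shows "\<Phi> 0 = 0" "\<Phi> (- x) = - \<Phi> x" "\<Phi> (\<Sum>i\<in>I. g i) = (\<Sum>i\<in>I. \<Phi> (g i))"
proof -
  show z: "\<Phi> 0 = 0" using add[of 0 0] by simp
  have "\<Phi> x + \<Phi> (- x) = 0" using add[of x "- x"] z by simp
  from minus_unique[OF this] show "\<Phi> (- x) = - \<Phi> x" by simp
  show "\<Phi> (\<Sum>i\<in>I. g i) = (\<Sum>i\<in>I. \<Phi> (g i))"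
    by (induction I rule: infinite_finite_induct) (simp_all add: z add)
qed

lemma card_NCon_le:
  assumes pi: "\<pi> \<in> NCon {1..n}"
  shows "card \<pi> \<le> n"
proof -
  have "inj_on Min \<pi>"
    by (rule inj_onI) (metis NCon_disj[OF pi] block_facts(4)[OF pi])
  moreover have "Min ` \<pi> \<subseteq> {1..n}" using block_facts(3,4)[OF pi] by blast
  ultimately have "card \<pi> \<le> card {1..n}" by (rule card_inj_on_le) simp
  then show ?thesis by simp
qed

lemma blk_lt: "finite S \<Longrightarrow> S \<noteq> {} \<Longrightarrow> blk S x < card S"
  using cnt_le[of S x] by (auto simp: blk_def card_gt_0_iff)

context bmq
begin

lemma main:
  fixes \<phi> :: "'a \<Rightarrow> complex" and \<Phi> :: "'f \<Rightarrow> complex" and \<kappa> :: "'a list \<Rightarrow> complex"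
  assumes addP: "\<And>x y. \<Phi> (x + y) = \<Phi> x + \<Phi> y"
    and fc: "free_cumulants \<phi> \<kappa>" and phi1: "\<phi> 1 = 1"
    and ind: "cyclic_antimonotone_indep L R \<phi> \<Phi> q" and Phiq: "\<Phi> q = 1"
  shows "\<Phi> (snd (Pw a n)) = - (\<Sum>\<pi>\<in>NC n. of_nat (kreweras_card n \<pi>) * kappa_pi \<kappa> \<pi> a)"
proof -
  note ad = additive_sum[of \<Phi>, OF addP]
  define sgc where "sgc S = ((-1::complex) ^ card S)" for S :: "nat set"
  define K where "K S = (\<Sum>\<pi>\<in>NC n. if resp (blk S) \<pi> then kappa_pi \<kappa> \<pi> a else 0)" for S
  have sgP: "\<Phi> (snd (sg S x)) = sgc S * \<Phi> (snd x)" for S x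
    by (simp add: sg_def sgc_def ad(2))
  have "\<Phi> (snd (Pw a n)) = (\<Sum>S\<in>Pow {0..n}. sgc S * \<Phi> (snd (Wd a n S)))"
    by (simp add: expansion snd_sum ad(3) sgP)
  also have "\<dots> = (\<Sum>S\<in>Pow {0..n} - {{}}. sgc S * \<Phi> (snd (Wd a n S)))"
  proof -
    have "Wd a n {} = (bseg a n {} 0, 0)"
      by (simp add: Wd_def alt_word_def)
    then have "sgc {} * \<Phi> (snd (Wd a n {})) = 0" using ad(1) by simp
    then show ?thesis
      by (subst sum.remove[of _ "{}"]) auto
  qed
  also have "\<dots> = (\<Sum>S\<in>Pow {0..n} - {{}}. sgc S * K S)"
  proof (rule sum.cong[OF refl])
    fix S assume S: "S \<in> Pow {0..n} - {{}}"
    then have Ssub: "S \<subseteq> {0..n}" and Sne: "S \<noteq> {}" by auto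
    have fin: "finite S" using finite_subset[OF Ssub] by simp
    have "\<Phi> (snd (Wd a n S)) = (\<Prod>j\<in>{0..<card S}. \<phi> (Aprod a (cls n S j)))"
      by (rule Phi_Wd[OF ind Phiq Ssub Sne])
    also have "\<dots> = (\<Prod>j\<in>{0..<card S}. \<Sum>\<rho>\<in>NCon {x\<in>{1..n}. blk S x = j}. kappa_pi \<kappa> \<rho> a)"
      by (rule prod.cong[OF refl]) (simp add: moment_cumulant_set[OF fc phi1] cls_def)
    also have "\<dots> = (\<Sum>\<pi>\<in>{\<pi>\<in>NCon {x\<in>{1..n}. blk S x \<in> {0..<card S}}. resp (blk S) \<pi>}. kappa_pi \<kappa> \<pi> a)"
      by (rule glue) (use NCF_blk[OF fin] in auto)
    also have "{x\<in>{1..n}. blk S x \<in> {0..<card S}} = {1..n}"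
      using blk_lt[OF fin Sne] by auto
    also have "(\<Sum>\<pi>\<in>{\<pi>\<in>NCon {1..n}. resp (blk S) \<pi>}. kappa_pi \<kappa> \<pi> a) = K S"
      unfolding K_def NC_NCon by (rule sum.inter_filter[OF NCon_finite]) simp
    finally show "sgc S * \<Phi> (snd (Wd a n S)) = sgc S * K S" by simp
  qed
  also have "\<dots> = (\<Sum>\<pi>\<in>NC n. kappa_pi \<kappa> \<pi> a *
        (\<Sum>S\<in>Pow {0..n} - {{}}. if resp (blk S) \<pi> then sgc S else 0))"
    unfolding K_def by (simp add: sum_distrib_left sum_distrib_right sum.swap[of _ "NC n"] mult_ac if_distrib
        cong: if_cong)
  also have "\<dots> = (\<Sum>\<pi>\<in>NC n. kappa_pi \<kappa> \<pi> a * (of_int (int (card \<pi>) - int (n + 1))))"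
  proof (rule sum.cong[OF refl])
    fix \<pi> assume "\<pi> \<in> NC n"
    then have pi: "\<pi> \<in> NCon {1..n}" by (simp add: NC_NCon)
    have "(\<Sum>S\<in>Pow {0..n} - {{}}. if resp (blk S) \<pi> then sgc S else 0)
        = of_int (\<Sum>S\<in>Pow {0..n} - {{}}. if resp (blk S) \<pi> then (-1::int) ^ card S else 0)"
      by (simp add: sgc_def of_int_sum if_distrib cong: if_cong)
    also have "\<dots> = of_int (int (card \<pi>) - int (n + 1))" by (simp only: comb_main[OF pi])
    finally show "kappa_pi \<kappa> \<pi> a * (\<Sum>S\<in>Pow {0..n} - {{}}. if resp (blk S) \<pi> then sgc S else 0)
        = kappa_pi \<kappa> \<pi> a * (of_int (int (card \<pi>) - int (n + 1)))" by simp
  qed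
  also have "\<dots> = - (\<Sum>\<pi>\<in>NC n. of_nat (kreweras_card n \<pi>) * kappa_pi \<kappa> \<pi> a)"
  proof -
    have "kappa_pi \<kappa> \<pi> a * (of_int (int (card \<pi>) - int (n + 1))) = - (of_nat (kreweras_card n \<pi>) * kappa_pi \<kappa> \<pi> a)"
      if "\<pi> \<in> NC n" for \<pi>
    proof -
      have "card \<pi> \<le> n" using card_NCon_le that by (simp add: NC_NCon)
      then have e: "of_nat (kreweras_card n \<pi>) = (of_nat (n + 1) - of_nat (card \<pi>) :: complex)"
        by (simp add: kreweras_card_def of_nat_diff)
      show ?thesis unfolding e by (simp add: algebra_simps)
    qed
    then show ?thesis by (simp add: sum_negf)
  qed
  finally show ?thesis .
qed

end

theorem theorem5p1:
  fixes smA :: "complex \<Rightarrow> 'a::ring_1 \<Rightarrow> 'a"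
    and smF :: "complex \<Rightarrow> 'f::ring \<Rightarrow> 'f"
    and L :: "'a \<Rightarrow> 'f \<Rightarrow> 'f" and R :: "'f \<Rightarrow> 'a \<Rightarrow> 'f"
    and \<phi> :: "'a \<Rightarrow> complex" and \<Phi> :: "'f \<Rightarrow> complex"
    and \<kappa> :: "'a list \<Rightarrow> complex"
    and q :: 'f and n :: nat and a :: "nat \<Rightarrow> 'a"
  assumes "ncps_typeB' smA smF L R \<phi> \<Phi>"
    and "free_cumulants \<phi> \<kappa>"
    and "q * q = q" and "\<Phi> q = 1"
    and "cyclic_antimonotone_indep L R \<phi> \<Phi> q"
    and "n \<ge> 1"
  shows "let p = ((1::'a), - q);
             tilde = (\<lambda>x. Bmult L R p (Bmult L R (x, 0) p))
         in phi' \<Phi> (Bprod L R (map (\<lambda>i. tilde (a i)) [1..<n+1])) =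
            - (\<Sum>\<pi>\<in>NC n. of_nat (kreweras_card n \<pi>) * kappa_pi \<kappa> \<pi> a)"
proof -
  have bma: "bimodule_algebra smA smF L R" and phi1: "\<phi> 1 = 1"
    and lin: "complex_linear_functional smF \<Phi>"
    using assms(1) unfolding ncps_typeB'_def by auto
  have addP: "\<And>x y. \<Phi> (x + y) = \<Phi> x + \<Phi> y" using lin unfolding complex_linear_functional_def by blast
  interpret bmq smA smF L R q
    by unfold_locales (use bma assms(3) in auto)
  have "Bprod L R (map (\<lambda>i. Bmult L R (1, - q) (Bmult L R (a i, 0) (1, - q))) [1..<n+1]) = Pw a n"
    by (rule Pw_tilde[OF assms(6)])
  then show ?thesis
    unfolding Let_def phi'_def using main[OF addP assms(2) phi1 assms(5) assms(4)] by simp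
qed

end
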